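(* Let $p(\theta,\phi,y)$ be a joint density in the unknowns $(\theta,\phi)$ (with $y$ fixed), where $\theta=(\theta_0,\dots,\theta_K)$ is split into $K+1$ blocks. Let $(\mathcal{C},\mathcal{U})$ be a partition of $\{0,\dots,K\}$, write $\theta_{\mathcal{C}}=(\theta_k)_{k\in\mathcal{C}}$, $\theta_{\mathcal{U}}=(\theta_k)_{k\in\mathcal{U}}$, and consider the partially factorized family $$\mathcal{Q}_{PF}=\Big\{q:\ q(\theta,\phi)=q(\theta_{\mathcal{C}}\mid\theta_{\mathcal{U}})\Big[\prod_{k\in\mathcal{U}}q(\theta_k)\Big]q(\phi)\Big\}$$ and the objective (ELBO) $L(q)=\mathbb{E}_{q(\theta,\phi)}[\log p(\theta,\phi,y)-\log q(\theta,\phi)]$. Assume all integrals and expectations below are finite. Then the coordinate-wise maximizers of $L$ over $\mathcal{Q}_{PF}$ are as follows: (i) for fixed $q(\theta)=q(\theta_{\mathcal{C}}\mid\theta_{\mathcal{U}})\prod_{k\in\mathcal{U}}q(\theta_k)$, the maximizer over $q(\phi)$ is $q(\phi)\propto\exp\{\mathbb{E}_{q(\theta)}[\log p(\theta,\phi,y)]\}$; (ii) for fixed $q(\phi)$ and fixed $q(\theta_k)$, $k\in\mathcal{U}$, the maximizer over the conditional factor $q(\theta_{\mathcal{C}}\mid\theta_{\mathcal{U}})$ is $$q(\theta_{\mathcal{C}}\mid\theta_{\mathcal{U}})=\frac{\exp\{\mathbb{E}_{q(\phi)}[\log p(\theta,\phi,y)]\}}{\int\exp\{\mathbb{E}_{q(\phi)}[\log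 p(\theta,\phi,y)]\}\,\mathrm{d}\theta_{\mathcal{C}}};$$ (iii) if $q(\theta_{\mathcal{C}}\mid\theta_{\mathcal{U}})$ is set as in (ii), then for $k\in\mathcal{U}$ and fixed $q(\phi)$ and $q(\theta_m)$, $m\in\mathcal{U}\setminus\{k\}$, the maximizer over $q(\theta_k)$ is $$q(\theta_k)\propto\exp\Big\{\mathbb{E}_{q(\theta_{\mathcal{U}\setminus k})}\Big[\log\int\exp\{\mathbb{E}_{q(\phi)}[\log p(\theta,\phi,y)]\}\,\mathrm{d}\theta_{\mathcal{C}}\Big]\Big\},$$ where $q(\theta_{\mathcal{U}\setminus k})=\prod_{m\in\mathcal{U},m\neq k}q(\theta_m)$.
   Context: Notation for blocks: $\mathcal{U}\setminus k$ denotes $\mathcal{U}$ with $k$ removed. The family $\mathcal{Q}_{PF}$ is the set of all joint densities over $(\theta,\phi)$ factorizing as displayed. When $\mathcal{C}=\emptyset$ this is the standard fully factorized mean-field family. *)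

theory Defs
  imports "HOL-Analysis.Analysis"
begin

text \<open>The parameter vector theta = (theta_0,...,theta_K) is a function on the
index set {0..K}; block k takes values in the measure space M k (all blocks share the
carrier type 'a, but each has its own base measure).  All densities are densities with respect to these base measures
(product measures for several blocks).  The data y is fixed and suppressed: p theta phi
stands for p(theta,phi,y).\<close>

definition ThetaM :: "nat \<Rightarrow> (nat \<Rightarrow> 'a measure) \<Rightarrow> (nat \<Rightarrow> 'a) measure" where
  "ThetaM K M = PiM {0..K} M"

definition is_density :: "'b measure \<Rightarrow> ('b \<Rightarrow> real) \<Rightarrow> bool" where
  "is_density N f \<longleftrightarrow> f \<in> borel_measurable N \<and> (\<forall>x\<in>space N. 0 \<le> f x)
     \<and> (\<integral>\<^sup>+ x. ennreal (f x) \<partial>N) = 1"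

text \<open>A conditional density q(theta_C | theta_U), represented as a function of the full
vector theta (= merge of theta_C and theta_U), integrating to one in theta_C for every
value of theta_U.\<close>
definition is_cond_density ::
  "nat \<Rightarrow> (nat \<Rightarrow> 'a measure) \<Rightarrow> nat set \<Rightarrow> nat set \<Rightarrow> ((nat \<Rightarrow> 'a) \<Rightarrow> real) \<Rightarrow> bool" where
  "is_cond_density K M C U qc \<longleftrightarrow> qc \<in> borel_measurable (ThetaM K M)
     \<and> (\<forall>\<theta>\<in>space (ThetaM K M). 0 \<le> qc \<theta>)
     \<and> (\<forall>\<theta>U\<in>space (PiM U M).
          (\<integral>\<^sup>+ \<theta>C. ennreal (qc (merge C U (\<theta>C, \<theta>U))) \<partial>PiM C M) = 1)"

definition in_QPF ::
  "nat \<Rightarrow> (nat \<Rightarrow> 'a measure) \<Rightarrow> 'b measure \<Rightarrow> nat set \<Rightarrow> nat set \<Rightarrow>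
   ((nat \<Rightarrow> 'a) \<Rightarrow> real) \<Rightarrow> (nat \<Rightarrow> 'a \<Rightarrow> real) \<Rightarrow> ('b \<Rightarrow> real) \<Rightarrow> bool" where
  "in_QPF K M N C U qc qu qphi \<longleftrightarrow> is_cond_density K M C U qc
     \<and> (\<forall>k\<in>U. is_density (M k) (qu k)) \<and> is_density N qphi"

definition qtheta :: "nat set \<Rightarrow> ((nat \<Rightarrow> 'a) \<Rightarrow> real) \<Rightarrow> (nat \<Rightarrow> 'a \<Rightarrow> real) \<Rightarrow> (nat \<Rightarrow> 'a) \<Rightarrow> real" where
  "qtheta U qc qu \<theta> = qc \<theta> * (\<Prod>k\<in>U. qu k (\<theta> k))"

definition qjoint ::
  "nat set \<Rightarrow> ((nat \<Rightarrow> 'a) \<Rightarrow> real) \<Rightarrow> (nat \<Rightarrow> 'a \<Rightarrow> real) \<Rightarrow> ('b \<Rightarrow> real) \<Rightarrow> (nat \<Rightarrow> 'a) \<times> 'b \<Rightarrow> real" where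
  "qjoint U qc qu qphi z = qtheta U qc qu (fst z) * qphi (snd z)"

text \<open>The ELBO L(q) = E_q[log p - log q] (with the convention 0 log 0 = 0).\<close>
definition elbo ::
  "nat \<Rightarrow> (nat \<Rightarrow> 'a measure) \<Rightarrow> 'b measure \<Rightarrow> nat set \<Rightarrow> ((nat \<Rightarrow> 'a) \<Rightarrow> 'b \<Rightarrow> real) \<Rightarrow>
   ((nat \<Rightarrow> 'a) \<Rightarrow> real) \<Rightarrow> (nat \<Rightarrow> 'a \<Rightarrow> real) \<Rightarrow> ('b \<Rightarrow> real) \<Rightarrow> real" where
  "elbo K M N U p qc qu qphi =
     (\<integral>z. qjoint U qc qu qphi z * (ln (p (fst z) (snd z)) - ln (qjoint U qc qu qphi z))
        \<partial>(ThetaM K M \<Otimes>\<^sub>M N))"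

definition elbo_finite ::
  "nat \<Rightarrow> (nat \<Rightarrow> 'a measure) \<Rightarrow> 'b measure \<Rightarrow> nat set \<Rightarrow> ((nat \<Rightarrow> 'a) \<Rightarrow> 'b \<Rightarrow> real) \<Rightarrow>
   ((nat \<Rightarrow> 'a) \<Rightarrow> real) \<Rightarrow> (nat \<Rightarrow> 'a \<Rightarrow> real) \<Rightarrow> ('b \<Rightarrow> real) \<Rightarrow> bool" where
  "elbo_finite K M N U p qc qu qphi \<longleftrightarrow>
     integrable (ThetaM K M \<Otimes>\<^sub>M N) (\<lambda>z. qjoint U qc qu qphi z * ln (p (fst z) (snd z)))
   \<and> integrable (ThetaM K M \<Otimes>\<^sub>M N) (\<lambda>z. qjoint U qc qu qphi z * ln (qjoint U qc qu qphi z))"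

definition Etheta_logp ::
  "nat \<Rightarrow> (nat \<Rightarrow> 'a measure) \<Rightarrow> nat set \<Rightarrow> ((nat \<Rightarrow> 'a) \<Rightarrow> 'b \<Rightarrow> real) \<Rightarrow>
   ((nat \<Rightarrow> 'a) \<Rightarrow> real) \<Rightarrow> (nat \<Rightarrow> 'a \<Rightarrow> real) \<Rightarrow> 'b \<Rightarrow> real" where
  "Etheta_logp K M U p qc qu \<phi> = (\<integral>\<theta>. qtheta U qc qu \<theta> * ln (p \<theta> \<phi>) \<partial>ThetaM K M)"

definition opt_phi ::
  "nat \<Rightarrow> (nat \<Rightarrow> 'a measure) \<Rightarrow> 'b measure \<Rightarrow> nat set \<Rightarrow> ((nat \<Rightarrow> 'a) \<Rightarrow> 'b \<Rightarrow> real) \<Rightarrow>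
   ((nat \<Rightarrow> 'a) \<Rightarrow> real) \<Rightarrow> (nat \<Rightarrow> 'a \<Rightarrow> real) \<Rightarrow> 'b \<Rightarrow> real" where
  "opt_phi K M N U p qc qu \<phi> =
     exp (Etheta_logp K M U p qc qu \<phi>) / (\<integral>\<psi>. exp (Etheta_logp K M U p qc qu \<psi>) \<partial>N)"

definition Ephi_logp :: "'b measure \<Rightarrow> ((nat \<Rightarrow> 'a) \<Rightarrow> 'b \<Rightarrow> real) \<Rightarrow> ('b \<Rightarrow> real) \<Rightarrow> (nat \<Rightarrow> 'a) \<Rightarrow> real" where
  "Ephi_logp N p qphi \<theta> = (\<integral>\<phi>. qphi \<phi> * ln (p \<theta> \<phi>) \<partial>N)"

definition Zc ::
  "(nat \<Rightarrow> 'a measure) \<Rightarrow> 'b measure \<Rightarrow> nat set \<Rightarrow> nat set \<Rightarrow> ((nat \<Rightarrow> 'a) \<Rightarrow> 'b \<Rightarrow> real) \<Rightarrow>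
   ('b \<Rightarrow> real) \<Rightarrow> (nat \<Rightarrow> 'a) \<Rightarrow> real" where
  "Zc M N C U p qphi \<theta>U = (\<integral>\<theta>C. exp (Ephi_logp N p qphi (merge C U (\<theta>C, \<theta>U))) \<partial>PiM C M)"

definition opt_cond ::
  "(nat \<Rightarrow> 'a measure) \<Rightarrow> 'b measure \<Rightarrow> nat set \<Rightarrow> nat set \<Rightarrow> ((nat \<Rightarrow> 'a) \<Rightarrow> 'b \<Rightarrow> real) \<Rightarrow>
   ('b \<Rightarrow> real) \<Rightarrow> (nat \<Rightarrow> 'a) \<Rightarrow> real" where
  "opt_cond M N C U p qphi \<theta> =
     exp (Ephi_logp N p qphi \<theta>) / Zc M N C U p qphi (restrict \<theta> U)"

definition Erest_logZ ::
  "(nat \<Rightarrow> 'a measure) \<Rightarrow> 'b measure \<Rightarrow> nat set \<Rightarrow> nat set \<Rightarrow> ((nat \<Rightarrow> 'a) \<Rightarrow> 'b \<Rightarrow> real) \<Rightarrow>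
   (nat \<Rightarrow> 'a \<Rightarrow> real) \<Rightarrow> ('b \<Rightarrow> real) \<Rightarrow> nat \<Rightarrow> 'a \<Rightarrow> real" where
  "Erest_logZ M N C U p qu qphi k x =
     (\<integral>\<theta>r. (\<Prod>m\<in>U - {k}. qu m (\<theta>r m)) * ln (Zc M N C U p qphi (\<theta>r(k := x)))
        \<partial>PiM (U - {k}) M)"

definition opt_block ::
  "(nat \<Rightarrow> 'a measure) \<Rightarrow> 'b measure \<Rightarrow> nat set \<Rightarrow> nat set \<Rightarrow> ((nat \<Rightarrow> 'a) \<Rightarrow> 'b \<Rightarrow> real) \<Rightarrow>
   (nat \<Rightarrow> 'a \<Rightarrow> real) \<Rightarrow> ('b \<Rightarrow> real) \<Rightarrow> nat \<Rightarrow> 'a \<Rightarrow> real" where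
  "opt_block M N C U p qu qphi k x =
     exp (Erest_logZ M N C U p qu qphi k x) / (\<integral>y. exp (Erest_logZ M N C U p qu qphi k y) \<partial>M k)"

end

theory Submission
  imports Defs
begin


lemma gibbs_pointwise:
  fixes r g Z :: real
  assumes "0 \<le> r" "0 < Z"
  shows "r * (g - ln r) \<le> r * ln Z + exp g / Z - r"
proof (cases "r = 0")
  case True then show ?thesis using assms by simp
next
  case False
  then have r: "0 < r" using assms by simp
  have q: "0 < exp g / (Z * r)" using r assms by simp
  have "ln (exp g / (Z * r)) \<le> exp g / (Z * r) - 1" by (rule ln_le_minus_one[OF q])
  moreover have "ln (exp g / (Z * r)) = g - ln Z - ln r"
    using r assms by (simp add: ln_div ln_mult)
  ultimately have "g - ln Z - ln r \<le> exp g / (Z * r) - 1" by simp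
  then have "r * (g - ln Z - ln r) \<le> r * (exp g / (Z * r) - 1)"
    using r by (simp add: mult_left_mono)
  moreover have "r * (exp g / (Z * r) - 1) = exp g / Z - r" using r by (simp add: field_simps)
  ultimately show ?thesis by (simp add: algebra_simps)
qed

lemma density_integrable:
  fixes r :: "'x \<Rightarrow> real"
  assumes "r \<in> borel_measurable A" "\<forall>x\<in>space A. 0 \<le> r x" "(\<integral>\<^sup>+ x. ennreal (r x) \<partial>A) = 1"
  shows "integrable A r" "integral\<^sup>L A r = 1"
proof -
  show i: "integrable A r"
    using assms by (intro integrableI_nonneg) (auto intro: AE_I2)
  have "(\<integral>\<^sup>+ x. ennreal (r x) \<partial>A) = ennreal (integral\<^sup>L A r)"
    using assms i by (intro nn_integral_eq_integral) (auto intro: AE_I2)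
  then show "integral\<^sup>L A r = 1" using assms(3) by simp
qed

lemma Z_pos:
  fixes r g :: "'x \<Rightarrow> real"
  assumes "r \<in> borel_measurable A" "\<forall>x\<in>space A. 0 \<le> r x" "(\<integral>\<^sup>+ x. ennreal (r x) \<partial>A) = 1"
    and "integrable A (\<lambda>x. exp (g x))"
  shows "0 < (\<integral>x. exp (g x) \<partial>A)"
proof (rule ccontr)
  assume "\<not> ?thesis"
  moreover have "0 \<le> (\<integral>x. exp (g x) \<partial>A)" by (rule integral_nonneg_AE) simp
  ultimately have "(\<integral>x. exp (g x) \<partial>A) = 0" by simp
  then have "AE x in A. exp (g x) = 0"
    using integral_nonneg_eq_0_iff_AE[of A "\<lambda>x. exp (g x)"] assms(4) by simp
  then have "AE x in A. False" by simp
  then have "AE x in A. ennreal (r x) = 0" by (rule eventually_mono) simp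
  then have "(\<integral>\<^sup>+ x. ennreal (r x) \<partial>A) = (\<integral>\<^sup>+ x. 0 \<partial>A)"
    by (rule nn_integral_cong_AE)
  with assms show False by simp
qed

lemma gibbs:
  fixes r g :: "'x \<Rightarrow> real"
  assumes rm: "r \<in> borel_measurable A" and r0: "\<forall>x\<in>space A. 0 \<le> r x"
    and r1: "(\<integral>\<^sup>+ x. ennreal (r x) \<partial>A) = 1"
    and ie: "integrable A (\<lambda>x. exp (g x))"
    and il: "integrable A (\<lambda>x. r x * (g x - ln (r x)))"
  shows "(\<integral>x. r x * (g x - ln (r x)) \<partial>A) \<le> ln (\<integral>x. exp (g x) \<partial>A)"
proof -
  define Z where "Z = (\<integral>x. exp (g x) \<partial>A)"
  have Z: "0 < Z" unfolding Z_def by (rule Z_pos[OF rm r0 r1 ie])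
  have ri: "integrable A r" "integral\<^sup>L A r = 1" using density_integrable[OF rm r0 r1] by auto
  have i1: "integrable A (\<lambda>x. r x * ln Z)" using ri by auto
  have i2: "integrable A (\<lambda>x. exp (g x) / Z)" using ie by auto
  have i3: "integrable A (\<lambda>x. r x * ln Z + exp (g x) / Z - r x)"
    using i1 i2 ri by (intro Bochner_Integration.integrable_diff Bochner_Integration.integrable_add) auto
  have "(\<integral>x. r x * (g x - ln (r x)) \<partial>A) \<le> (\<integral>x. r x * ln Z + exp (g x) / Z - r x \<partial>A)"
    using Z r0 by (intro integral_mono il i3) (auto intro!: gibbs_pointwise)
  also have "\<dots> = (\<integral>x. r x * ln Z \<partial>A) + (\<integral>x. exp (g x) / Z \<partial>A) - (\<integral>x. r x \<partial>A)"
    using i1 i2 ri by (simp add: Bochner_Integration.integral_diff Bochner_Integration.integral_add)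
  also have "\<dots> = ln Z * 1 + Z / Z - 1"
    using ri by (simp add: Z_def)
  also have "\<dots> = ln Z" using Z by simp
  finally show ?thesis unfolding Z_def .
qed



lemma fiber_fst:
  fixes F :: "'x \<times> 'y \<Rightarrow> real" and G :: "'x \<Rightarrow> real"
  assumes psf: "pair_sigma_finite A B" and F: "integrable (A \<Otimes>\<^sub>M B) F"
    and Gm: "G \<in> borel_measurable A"
    and fib: "\<And>a. a \<in> space A \<Longrightarrow> integrable B (\<lambda>b. F (a,b)) \<Longrightarrow> (\<integral>b. F (a,b) \<partial>B) = G a"
  shows "integrable A G" "integral\<^sup>L (A \<Otimes>\<^sub>M B) F = integral\<^sup>L A G"
proof -
  interpret pair_sigma_finite A B by (rule psf)
  have ae: "AE a in A. (\<integral>b. F (a,b) \<partial>B) = G a"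
    using AE_integrable_fst'[OF F] AE_space by eventually_elim (simp add: fib)
  have m: "(\<lambda>a. \<integral>b. F (a,b) \<partial>B) \<in> borel_measurable A"
    using integrable_fst'[OF F] by auto
  show "integrable A G" by (rule integrable_cong_AE_imp[OF integrable_fst'[OF F] Gm ae])
  have "integral\<^sup>L (A \<Otimes>\<^sub>M B) F = (\<integral>a. (\<integral>b. F (a,b) \<partial>B) \<partial>A)"
    using integral_fst'[OF F] by simp
  also have "\<dots> = integral\<^sup>L A G" by (rule integral_cong_AE[OF m Gm ae])
  finally show "integral\<^sup>L (A \<Otimes>\<^sub>M B) F = integral\<^sup>L A G" .
qed

lemma fiber_snd:
  fixes F :: "'x \<times> 'y \<Rightarrow> real" and G :: "'y \<Rightarrow> real"
  assumes psf: "pair_sigma_finite A B" and F: "integrable (A \<Otimes>\<^sub>M B) F"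
    and Gm: "G \<in> borel_measurable B"
    and fib: "\<And>b. b \<in> space B \<Longrightarrow> integrable A (\<lambda>a. F (a,b)) \<Longrightarrow> (\<integral>a. F (a,b) \<partial>A) = G b"
  shows "integrable B G" "integral\<^sup>L (A \<Otimes>\<^sub>M B) F = integral\<^sup>L B G"
proof -
  interpret pair_sigma_finite A B by (rule psf)
  have cp: "(\<lambda>(x,y). F (x,y)) = F" by auto
  have F': "integrable (A \<Otimes>\<^sub>M B) (case_prod (\<lambda>x y. F (x,y)))" using F by (simp add: cp)
  have ae: "AE b in B. (\<integral>a. F (a,b) \<partial>A) = G b"
    using AE_integrable_snd[OF F'] AE_space by eventually_elim (simp add: fib)
  have m: "(\<lambda>b. \<integral>a. F (a,b) \<partial>A) \<in> borel_measurable B"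
    using integrable_snd[OF F'] by auto
  show "integrable B G" by (rule integrable_cong_AE_imp[OF integrable_snd[OF F'] Gm ae])
  have "integral\<^sup>L (A \<Otimes>\<^sub>M B) F = (\<integral>b. (\<integral>a. F (a,b) \<partial>A) \<partial>B)"
    using integral_snd[OF F'] by (simp add: cp)
  also have "\<dots> = integral\<^sup>L B G" by (rule integral_cong_AE[OF m Gm ae])
  finally show "integral\<^sup>L (A \<Otimes>\<^sub>M B) F = integral\<^sup>L B G" .
qed

lemma xlnmult:
  fixes a b :: real
  assumes "0 \<le> a" "0 \<le> b"
  shows "a * b * ln (a * b) = b * (a * ln a) + a * b * ln b"
proof (cases "a = 0 \<or> b = 0")
  case True then show ?thesis by auto
next
  case False then have "0 < a" "0 < b" using assms by auto
  then show ?thesis by (simp add: ln_mult algebra_simps)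
qed



lemma elbo_split_snd:
  fixes u :: "'x \<Rightarrow> real" and v :: "'y \<Rightarrow> real" and P :: "'x \<Rightarrow> 'y \<Rightarrow> real"
  assumes psf: "pair_sigma_finite X Y"
    and um[measurable]: "u \<in> borel_measurable X" and u0: "\<forall>x\<in>space X. 0 \<le> u x"
    and u1: "(\<integral>\<^sup>+ x. ennreal (u x) \<partial>X) = 1"
    and vm[measurable]: "v \<in> borel_measurable Y" and v0: "\<forall>y\<in>space Y. 0 \<le> v y"
    and Pm[measurable]: "(\<lambda>z. P (fst z) (snd z)) \<in> borel_measurable (X \<Otimes>\<^sub>M Y)"
    and i1: "integrable (X \<Otimes>\<^sub>M Y) (\<lambda>z. (u (fst z) * v (snd z)) * ln (P (fst z) (snd z)))"
    and i2: "integrable (X \<Otimes>\<^sub>M Y) (\<lambda>z. (u (fst z) * v (snd z)) * ln (u (fst z) * v (snd z)))"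
    and iy: "\<forall>y\<in>space Y. integrable X (\<lambda>x. u x * ln (P x y))"
  shows "integrable Y (\<lambda>y. v y * ((\<integral>x. u x * ln (P x y) \<partial>X) - (\<integral>x. u x * ln (u x) \<partial>X) - ln (v y)))"
    "(\<integral>z. (u (fst z) * v (snd z)) * (ln (P (fst z) (snd z)) - ln (u (fst z) * v (snd z))) \<partial>(X \<Otimes>\<^sub>M Y))
     = (\<integral>y. v y * ((\<integral>x. u x * ln (P x y) \<partial>X) - (\<integral>x. u x * ln (u x) \<partial>X) - ln (v y)) \<partial>Y)"
proof -
  interpret pair_sigma_finite X Y by (rule psf)
  define Hu where "Hu = (\<integral>x. u x * ln (u x) \<partial>X)"
  let ?F = "\<lambda>z. (u (fst z) * v (snd z)) * (ln (P (fst z) (snd z)) - ln (u (fst z) * v (snd z)))"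
  let ?G = "\<lambda>y. v y * ((\<integral>x. u x * ln (P x y) \<partial>X) - Hu - ln (v y))"
  have Fi: "integrable (X \<Otimes>\<^sub>M Y) ?F"
    using Bochner_Integration.integrable_diff[OF i1 i2] by (simp add: algebra_simps)
  have Pm': "(\<lambda>(y, x). u x * ln (P x y)) \<in> borel_measurable (Y \<Otimes>\<^sub>M X)"
  proof -
    have "(\<lambda>z. u (fst z) * ln (P (fst z) (snd z))) \<in> borel_measurable (X \<Otimes>\<^sub>M Y)" by measurable
    from measurable_pair_swap[OF this] show ?thesis by (simp add: split_beta)
  qed
  have EPm: "(\<lambda>y. \<integral>x. u x * ln (P x y) \<partial>X) \<in> borel_measurable Y"
    using M1.borel_measurable_lebesgue_integral[of "\<lambda>y x. u x * ln (P x y)" Y] Pm' by simp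
  have Gm: "?G \<in> borel_measurable Y" using EPm by measurable
  have ui: "integrable X u" "integral\<^sup>L X u = 1" using density_integrable[OF um u0 u1] by auto
  have fib: "(\<integral>x. ?F (x,y) \<partial>X) = ?G y" if y: "y \<in> space Y" and fi: "integrable X (\<lambda>x. ?F (x,y))" for y
  proof (cases "v y = 0")
    case True then show ?thesis by simp
  next
    case False
    then have vp: "0 < v y" using v0 y by force
    have eq: "?F (x,y) = v y * (u x * ln (P x y) - u x * ln (u x) - ln (v y) * u x)" if x: "x \<in> space X" for x
      using xlnmult[of "u x" "v y"] u0 x vp by (simp add: algebra_simps)
    have eq2: "u x * ln (u x) = u x * ln (P x y) - ln (v y) * u x - ?F (x,y) / v y" if x: "x \<in> space X" for x
      using eq[OF x] vp by (simp add: field_simps)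
    have "integrable X (\<lambda>x. u x * ln (P x y) - ln (v y) * u x - ?F (x,y) / v y)"
      using iy y ui integrable_divide_zero[OF fi, of "v y"] by (intro Bochner_Integration.integrable_diff) auto
    then have iu: "integrable X (\<lambda>x. u x * ln (u x))"
      using Bochner_Integration.integrable_cong[OF refl eq2, of X] by simp
    have "(\<integral>x. ?F (x,y) \<partial>X) = (\<integral>x. v y * (u x * ln (P x y) - u x * ln (u x) - ln (v y) * u x) \<partial>X)"
      by (rule Bochner_Integration.integral_cong[OF refl eq])
    also have "\<dots> = v y * ((\<integral>x. u x * ln (P x y) \<partial>X) - Hu - ln (v y) * (\<integral>x. u x \<partial>X))"
      using iy y ui iu unfolding Hu_def
      by (simp add: Bochner_Integration.integral_diff Bochner_Integration.integrable_diff)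
    also have "\<dots> = ?G y" using ui by simp
    finally show ?thesis .
  qed
  note r = fiber_snd[OF psf Fi Gm fib]
  show "integrable Y (\<lambda>y. v y * ((\<integral>x. u x * ln (P x y) \<partial>X) - (\<integral>x. u x * ln (u x) \<partial>X) - ln (v y)))"
    using r(1) unfolding Hu_def .
  show "(\<integral>z. ?F z \<partial>(X \<Otimes>\<^sub>M Y))
     = (\<integral>y. v y * ((\<integral>x. u x * ln (P x y) \<partial>X) - (\<integral>x. u x * ln (u x) \<partial>X) - ln (v y)) \<partial>Y)"
    using r(2) unfolding Hu_def .
qed

lemma elbo_split_fst:
  fixes u :: "'x \<Rightarrow> real" and v :: "'y \<Rightarrow> real" and P :: "'x \<Rightarrow> 'y \<Rightarrow> real"
  assumes psf: "pair_sigma_finite X Y"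
    and um[measurable]: "u \<in> borel_measurable X" and u0: "\<forall>x\<in>space X. 0 \<le> u x"
    and vm[measurable]: "v \<in> borel_measurable Y" and v0: "\<forall>y\<in>space Y. 0 \<le> v y"
    and v1: "(\<integral>\<^sup>+ y. ennreal (v y) \<partial>Y) = 1"
    and Pm[measurable]: "(\<lambda>z. P (fst z) (snd z)) \<in> borel_measurable (X \<Otimes>\<^sub>M Y)"
    and i1: "integrable (X \<Otimes>\<^sub>M Y) (\<lambda>z. (u (fst z) * v (snd z)) * ln (P (fst z) (snd z)))"
    and i2: "integrable (X \<Otimes>\<^sub>M Y) (\<lambda>z. (u (fst z) * v (snd z)) * ln (u (fst z) * v (snd z)))"
    and ix: "\<forall>x\<in>space X. integrable Y (\<lambda>y. v y * ln (P x y))"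
  shows "integrable X (\<lambda>x. u x * ((\<integral>y. v y * ln (P x y) \<partial>Y) - (\<integral>y. v y * ln (v y) \<partial>Y) - ln (u x)))"
    "(\<integral>z. (u (fst z) * v (snd z)) * (ln (P (fst z) (snd z)) - ln (u (fst z) * v (snd z))) \<partial>(X \<Otimes>\<^sub>M Y))
     = (\<integral>x. u x * ((\<integral>y. v y * ln (P x y) \<partial>Y) - (\<integral>y. v y * ln (v y) \<partial>Y) - ln (u x)) \<partial>X)"
proof -
  interpret pair_sigma_finite X Y by (rule psf)
  define Hv where "Hv = (\<integral>y. v y * ln (v y) \<partial>Y)"
  let ?F = "\<lambda>z. (u (fst z) * v (snd z)) * (ln (P (fst z) (snd z)) - ln (u (fst z) * v (snd z)))"
  let ?G = "\<lambda>x. u x * ((\<integral>y. v y * ln (P x y) \<partial>Y) - Hv - ln (u x))"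
  have Fi: "integrable (X \<Otimes>\<^sub>M Y) ?F"
    using Bochner_Integration.integrable_diff[OF i1 i2] by (simp add: algebra_simps)
  have Pm': "(\<lambda>(x, y). v y * ln (P x y)) \<in> borel_measurable (X \<Otimes>\<^sub>M Y)"
  proof -
    have "(\<lambda>z. v (snd z) * ln (P (fst z) (snd z))) \<in> borel_measurable (X \<Otimes>\<^sub>M Y)" by measurable
    then show ?thesis by (simp add: split_beta)
  qed
  have EPm: "(\<lambda>x. \<integral>y. v y * ln (P x y) \<partial>Y) \<in> borel_measurable X"
    using M2.borel_measurable_lebesgue_integral[of "\<lambda>x y. v y * ln (P x y)" X] Pm' by simp
  have Gm: "?G \<in> borel_measurable X" using EPm by measurable
  have vi: "integrable Y v" "integral\<^sup>L Y v = 1" using density_integrable[OF vm v0 v1] by auto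
  have fib: "(\<integral>y. ?F (x,y) \<partial>Y) = ?G x" if x: "x \<in> space X" and fi: "integrable Y (\<lambda>y. ?F (x,y))" for x
  proof (cases "u x = 0")
    case True then show ?thesis by simp
  next
    case False
    then have up: "0 < u x" using u0 x by force
    have eq: "?F (x,y) = u x * (v y * ln (P x y) - v y * ln (v y) - ln (u x) * v y)" if y: "y \<in> space Y" for y
      using xlnmult[of "v y" "u x"] v0 y up by (simp add: algebra_simps)
    have eq2: "v y * ln (v y) = v y * ln (P x y) - ln (u x) * v y - ?F (x,y) / u x" if y: "y \<in> space Y" for y
      using eq[OF y] up by (simp add: field_simps)
    have "integrable Y (\<lambda>y. v y * ln (P x y) - ln (u x) * v y - ?F (x,y) / u x)"
      using ix x vi integrable_divide_zero[OF fi, of "u x"] by (intro Bochner_Integration.integrable_diff) auto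
    then have iv: "integrable Y (\<lambda>y. v y * ln (v y))"
      using Bochner_Integration.integrable_cong[OF refl eq2, of Y] by simp
    have "(\<integral>y. ?F (x,y) \<partial>Y) = (\<integral>y. u x * (v y * ln (P x y) - v y * ln (v y) - ln (u x) * v y) \<partial>Y)"
      by (rule Bochner_Integration.integral_cong[OF refl eq])
    also have "\<dots> = u x * ((\<integral>y. v y * ln (P x y) \<partial>Y) - Hv - ln (u x) * (\<integral>y. v y \<partial>Y))"
      using ix x vi iv unfolding Hv_def
      by (simp add: Bochner_Integration.integral_diff Bochner_Integration.integrable_diff)
    also have "\<dots> = ?G x" using vi by simp
    finally show ?thesis .
  qed
  note r = fiber_fst[OF psf Fi Gm fib]
  show "integrable X (\<lambda>x. u x * ((\<integral>y. v y * ln (P x y) \<partial>Y) - (\<integral>y. v y * ln (v y) \<partial>Y) - ln (u x)))"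
    using r(1) unfolding Hv_def .
  show "(\<integral>z. ?F z \<partial>(X \<Otimes>\<^sub>M Y))
     = (\<integral>x. u x * ((\<integral>y. v y * ln (P x y) \<partial>Y) - (\<integral>y. v y * ln (v y) \<partial>Y) - ln (u x)) \<partial>X)"
    using r(2) unfolding Hv_def .
qed



definition extM :: "'i set \<Rightarrow> ('i \<Rightarrow> 'a measure) \<Rightarrow> 'i \<Rightarrow> 'a measure" where
  "extM S M k = (if k \<in> S then M k else count_space {})"

lemma psf_extM: assumes a: "\<forall>k\<in>S. sigma_finite_measure (M k)" shows "product_sigma_finite (extM S M)"
proof (rule product_sigma_finite.intro)
  fix k
  show "sigma_finite_measure (extM S M k)"
  proof (cases "k \<in> S")
    case True then show ?thesis using a by (simp add: extM_def)
  next
    case False then show ?thesis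
      by (simp add: extM_def sigma_finite_measure_count_space_countable)
  qed
qed

lemma PiM_extM: "I \<subseteq> S \<Longrightarrow> PiM I (extM S M) = PiM I M"
  unfolding extM_def by (rule PiM_cong) auto

lemma sf_PiM:
  assumes "\<forall>k\<in>S. sigma_finite_measure (M k)" "I \<subseteq> S" "finite I"
  shows "sigma_finite_measure (PiM I M)"
proof -
  interpret product_sigma_finite "extM S M" using psf_extM[OF assms(1)] .
  show ?thesis using sigma_finite[OF assms(3)] PiM_extM[of I S M] assms(2) by simp
qed

lemma psf_PiM:
  assumes "\<forall>k\<in>S. sigma_finite_measure (M k)" "I \<subseteq> S" "finite I" "J \<subseteq> S" "finite J"
  shows "pair_sigma_finite (PiM I M) (PiM J M)"
  using sf_PiM[OF assms(1-3)] sf_PiM[OF assms(1,4,5)]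
  by (simp add: pair_sigma_finite_def)

lemma distr_merge':
  assumes "\<forall>k\<in>S. sigma_finite_measure (M k)" "I \<subseteq> S" "J \<subseteq> S" "I \<inter> J = {}" "finite I" "finite J"
  shows "distr (PiM I M \<Otimes>\<^sub>M PiM J M) (PiM (I \<union> J) M) (merge I J) = PiM (I \<union> J) M"
proof -
  interpret product_sigma_finite "extM S M" using psf_extM[OF assms(1)] .
  show ?thesis using distr_merge[OF assms(4-6)] PiM_extM[of I S M] PiM_extM[of J S M]
      PiM_extM[of "I \<union> J" S M] assms(2,3) by simp
qed

lemma nn_integral_prod':
  assumes "\<forall>k\<in>S. sigma_finite_measure (M k)" "I \<subseteq> S" "finite I"
    "\<And>i. i \<in> I \<Longrightarrow> f i \<in> borel_measurable (M i)"
  shows "(\<integral>\<^sup>+ x. (\<Prod>i\<in>I. f i (x i)) \<partial>Pi\<^sub>M I M) = (\<Prod>i\<in>I. integral\<^sup>N (M i) (f i))"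
proof -
  interpret product_sigma_finite "extM S M" using psf_extM[OF assms(1)] .
  have e: "\<And>i. i \<in> I \<Longrightarrow> extM S M i = M i" using assms(2) unfolding extM_def by auto
  have "(\<integral>\<^sup>+ x. (\<Prod>i\<in>I. f i (x i)) \<partial>Pi\<^sub>M I (extM S M)) = (\<Prod>i\<in>I. integral\<^sup>N (extM S M i) (f i))"
    using assms(4) e by (intro product_nn_integral_prod assms(3)) auto
  then show ?thesis using PiM_extM[of I S M] assms(2) e by simp
qed

lemma integral_singleton':
  fixes f :: "'a \<Rightarrow> real"
  assumes "\<forall>k\<in>S. sigma_finite_measure (M k)" "i \<in> S" "f \<in> borel_measurable (M i)"
  shows "(\<integral>x. f (x i) \<partial>Pi\<^sub>M {i} M) = integral\<^sup>L (M i) f"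
proof -
  interpret product_sigma_finite "extM S M" using psf_extM[OF assms(1)] .
  have e: "extM S M i = M i" using assms(2) unfolding extM_def by auto
  have p: "PiM {i} (extM S M) = PiM {i} M" using PiM_extM[of "{i}" S M] assms(2) by blast
  have "(\<integral>x. f (x i) \<partial>Pi\<^sub>M {i} (extM S M)) = integral\<^sup>L (extM S M i) f"
    by (rule product_integral_singleton) (unfold e, rule assms(3))
  then show ?thesis unfolding p e .
qed



lemma merge_meas_fst:
  "y \<in> space (PiM J M) \<Longrightarrow> (\<lambda>x. merge I J (x,y)) \<in> measurable (PiM I M) (PiM (I \<union> J) M)"
  by (rule measurable_compose[OF measurable_Pair2' measurable_merge])

lemma merge_meas_snd:
  "x \<in> space (PiM I M) \<Longrightarrow> (\<lambda>y. merge I J (x,y)) \<in> measurable (PiM J M) (PiM (I \<union> J) M)"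
  by (rule measurable_compose[OF measurable_Pair1' measurable_merge])

lemma prod_meas:
  fixes qu :: "'i \<Rightarrow> 'a \<Rightarrow> real"
  assumes "U \<subseteq> I" "\<forall>k\<in>U. qu k \<in> borel_measurable (M k)"
  shows "(\<lambda>\<theta>. \<Prod>k\<in>U. qu k (\<theta> k)) \<in> borel_measurable (PiM I M)"
proof (rule borel_measurable_prod)
  fix k assume k: "k \<in> U"
  have "(\<lambda>\<theta>. \<theta> k) \<in> measurable (PiM I M) (M k)" using k assms(1) by auto
  from measurable_compose[OF this] assms(2) k
  show "(\<lambda>\<theta>. qu k (\<theta> k)) \<in> borel_measurable (PiM I M)" by auto
qed

lemma prod_nonneg':
  fixes qu :: "'i \<Rightarrow> 'a \<Rightarrow> real"
  assumes "U \<subseteq> I" "\<forall>k\<in>U. \<forall>x\<in>space (M k). 0 \<le> qu k x" "\<theta> \<in> space (PiM I M)"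
  shows "0 \<le> (\<Prod>k\<in>U. qu k (\<theta> k))"
  using assms by (intro prod_nonneg) (auto simp: space_PiM PiE_iff)

lemma prod_density:
  assumes sf: "\<forall>k\<in>S. sigma_finite_measure (M k)" and US: "U \<subseteq> S" and fU: "finite U"
    and qum: "\<forall>k\<in>U. qu k \<in> borel_measurable (M k)"
    and qu0: "\<forall>k\<in>U. \<forall>x\<in>space (M k). 0 \<le> qu k x"
    and qu1: "\<forall>k\<in>U. (\<integral>\<^sup>+ x. ennreal (qu k x) \<partial>M k) = 1"
  shows "(\<integral>\<^sup>+ \<theta>. ennreal (\<Prod>k\<in>U. qu k (\<theta> k)) \<partial>PiM U M) = 1"
proof -
  have "(\<integral>\<^sup>+ \<theta>. ennreal (\<Prod>k\<in>U. qu k (\<theta> k)) \<partial>PiM U M) = (\<integral>\<^sup>+ \<theta>. (\<Prod>k\<in>U. ennreal (qu k (\<theta> k))) \<partial>PiM U M)"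
  proof (rule nn_integral_cong)
    fix \<theta> assume "\<theta> \<in> space (PiM U M)"
    then show "ennreal (\<Prod>k\<in>U. qu k (\<theta> k)) = (\<Prod>k\<in>U. ennreal (qu k (\<theta> k)))"
      using qu0 by (subst prod_ennreal) (auto simp: space_PiM PiE_iff)
  qed
  also have "\<dots> = (\<Prod>k\<in>U. integral\<^sup>N (M k) (\<lambda>x. ennreal (qu k x)))"
    using qum by (intro nn_integral_prod'[OF sf US fU]) auto
  also have "\<dots> = 1" using qu1 by simp
  finally show ?thesis .
qed

lemma qtheta_density:
  assumes sf: "\<forall>k\<in>S. sigma_finite_measure (M k)" and CS: "C \<subseteq> S" and US: "U \<subseteq> S"
    and fC: "finite C" and fU: "finite U" and CU: "C \<inter> U = {}"
    and qcm: "qc \<in> borel_measurable (PiM (C \<union> U) M)"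
    and qc0: "\<forall>\<theta>\<in>space (PiM (C \<union> U) M). 0 \<le> qc \<theta>"
    and qc1: "\<forall>\<theta>U\<in>space (PiM U M). (\<integral>\<^sup>+ \<theta>C. ennreal (qc (merge C U (\<theta>C, \<theta>U))) \<partial>PiM C M) = 1"
    and qum: "\<forall>k\<in>U. qu k \<in> borel_measurable (M k)"
    and qu0: "\<forall>k\<in>U. \<forall>x\<in>space (M k). 0 \<le> qu k x"
    and qu1: "\<forall>k\<in>U. (\<integral>\<^sup>+ x. ennreal (qu k x) \<partial>M k) = 1"
  shows "qtheta U qc qu \<in> borel_measurable (PiM (C \<union> U) M)"
    "\<forall>\<theta>\<in>space (PiM (C \<union> U) M). 0 \<le> qtheta U qc qu \<theta>"
    "(\<integral>\<^sup>+ \<theta>. ennreal (qtheta U qc qu \<theta>) \<partial>PiM (C \<union> U) M) = 1"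
proof -
  have pm: "(\<lambda>\<theta>. \<Prod>k\<in>U. qu k (\<theta> k)) \<in> borel_measurable (PiM (C \<union> U) M)"
    using prod_meas[of U "C \<union> U" qu M] qum by auto
  show m: "qtheta U qc qu \<in> borel_measurable (PiM (C \<union> U) M)"
    unfolding qtheta_def[abs_def] using qcm pm by measurable
  show "\<forall>\<theta>\<in>space (PiM (C \<union> U) M). 0 \<le> qtheta U qc qu \<theta>"
    unfolding qtheta_def using qc0 prod_nonneg'[of U "C \<union> U" M qu] qu0 by auto
  interpret sC: sigma_finite_measure "PiM C M" by (rule sf_PiM[OF sf CS fC])
  have UC: "U \<union> C = C \<union> U" by auto
  have "(\<integral>\<^sup>+ \<theta>. ennreal (qtheta U qc qu \<theta>) \<partial>PiM (C \<union> U) M)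
      = (\<integral>\<^sup>+ \<theta>. ennreal (qtheta U qc qu \<theta>) \<partial>distr (PiM U M \<Otimes>\<^sub>M PiM C M) (PiM (C \<union> U) M) (merge U C))"
    using distr_merge'[OF sf US CS _ fU fC] CU UC by (simp add: Int_commute)
  also have "\<dots> = (\<integral>\<^sup>+ z. ennreal (qtheta U qc qu (merge U C z)) \<partial>(PiM U M \<Otimes>\<^sub>M PiM C M))"
    using m measurable_merge[of U C M] UC by (intro nn_integral_distr) auto
  also have "\<dots> = (\<integral>\<^sup>+ y. (\<integral>\<^sup>+ x. ennreal (qtheta U qc qu (merge U C (y, x))) \<partial>PiM C M) \<partial>PiM U M)"
    using m measurable_merge[of U C M] UC by (intro sC.nn_integral_fst[symmetric]) auto
  also have "\<dots> = (\<integral>\<^sup>+ y. ennreal (\<Prod>k\<in>U. qu k (y k)) \<partial>PiM U M)"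
  proof (rule nn_integral_cong)
    fix y assume y: "y \<in> space (PiM U M)"
    have eq: "qtheta U qc qu (merge U C (y, x)) = qc (merge C U (x, y)) * (\<Prod>k\<in>U. qu k (y k))" for x
      proof -
      have "merge U C (y, x) = merge C U (x, y)" using CU merge_commute[of U C y x] by auto
      moreover have "merge C U (x, y) k = y k" if "k \<in> U" for k using CU that by simp
      ultimately show ?thesis unfolding qtheta_def by simp
    qed
    have w0: "0 \<le> (\<Prod>k\<in>U. qu k (y k))" using prod_nonneg'[OF _ qu0 y] by simp
    have qm: "(\<lambda>x. qc (merge C U (x, y))) \<in> borel_measurable (PiM C M)"
      using measurable_compose[OF merge_meas_fst[OF y] qcm] .
    have "(\<integral>\<^sup>+ x. ennreal (qtheta U qc qu (merge U C (y, x))) \<partial>PiM C M)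
        = (\<integral>\<^sup>+ x. ennreal (qc (merge C U (x, y))) * ennreal (\<Prod>k\<in>U. qu k (y k)) \<partial>PiM C M)"
    proof (rule nn_integral_cong)
      fix x assume x: "x \<in> space (PiM C M)"
      have "merge C U (x,y) \<in> space (PiM (C \<union> U) M)"
        using measurable_space[OF merge_meas_fst[OF y] x] .
      then have "0 \<le> qc (merge C U (x, y))" using qc0 by auto
      then show "ennreal (qtheta U qc qu (merge U C (y, x))) = ennreal (qc (merge C U (x, y))) * ennreal (\<Prod>k\<in>U. qu k (y k))"
        unfolding eq using w0 by (simp add: ennreal_mult)
    qed
    also have "\<dots> = (\<integral>\<^sup>+ x. ennreal (qc (merge C U (x, y))) \<partial>PiM C M) * ennreal (\<Prod>k\<in>U. qu k (y k))"
      using qm by (intro nn_integral_multc) auto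
    also have "\<dots> = ennreal (\<Prod>k\<in>U. qu k (y k))" using qc1 y by simp
    finally show "(\<integral>\<^sup>+ x. ennreal (qtheta U qc qu (merge U C (y, x))) \<partial>PiM C M) = ennreal (\<Prod>k\<in>U. qu k (y k))" .
  qed
  also have "\<dots> = 1" by (rule prod_density[OF sf US fU qum qu0 qu1])
  finally show "(\<integral>\<^sup>+ \<theta>. ennreal (qtheta U qc qu \<theta>) \<partial>PiM (C \<union> U) M) = 1" .
qed



lemma Theta_eq: "C \<union> U = {0..K} \<Longrightarrow> ThetaM K M = PiM (C \<union> U) M"
  unfolding ThetaM_def by simp

lemma qtheta_facts:
  assumes CU: "C \<inter> U = {}" "C \<union> U = {0..K}"
    and sfM: "\<forall>k\<in>{0..K}. sigma_finite_measure (M k)"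
    and qc: "is_cond_density K M C U qc"
    and qu: "\<forall>k\<in>U. is_density (M k) (qu k)"
  shows "qtheta U qc qu \<in> borel_measurable (ThetaM K M)"
    "\<forall>\<theta>\<in>space (ThetaM K M). 0 \<le> qtheta U qc qu \<theta>"
    "(\<integral>\<^sup>+ \<theta>. ennreal (qtheta U qc qu \<theta>) \<partial>ThetaM K M) = 1"
proof -
  have fin: "finite C" "finite U" using CU(2) finite_subset[of _ "{0..K}"] by auto
  have sub: "C \<subseteq> {0..K}" "U \<subseteq> {0..K}" using CU(2) by auto
  note T = Theta_eq[OF CU(2), of M]
  note r = qtheta_density[OF sfM sub fin CU(1), of qc qu]
  show "qtheta U qc qu \<in> borel_measurable (ThetaM K M)"
    "\<forall>\<theta>\<in>space (ThetaM K M). 0 \<le> qtheta U qc qu \<theta>"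
    "(\<integral>\<^sup>+ \<theta>. ennreal (qtheta U qc qu \<theta>) \<partial>ThetaM K M) = 1"
    using r qc qu unfolding T is_cond_density_def is_density_def by auto
qed

lemma psf_TN:
  assumes sfM: "\<forall>k\<in>{0..K}. sigma_finite_measure (M k)" and sfN: "sigma_finite_measure N"
  shows "pair_sigma_finite (ThetaM K M) N"
  using sf_PiM[OF sfM, of "{0..K}"] sfN unfolding ThetaM_def by (simp add: pair_sigma_finite_def)

lemma density_from_exp:
  fixes g :: "'x \<Rightarrow> real"
  assumes ie: "integrable A (\<lambda>x. exp (g x))" and Z: "0 < (\<integral>x. exp (g x) \<partial>A)"
  shows "is_density A (\<lambda>x. exp (g x) / (\<integral>x. exp (g x) \<partial>A))"
proof -
  let ?Z = "(\<integral>x. exp (g x) \<partial>A)"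
  have m: "(\<lambda>x. exp (g x)) \<in> borel_measurable A" using ie by auto
  have i: "integrable A (\<lambda>x. exp (g x) / ?Z)" using ie by auto
  have "(\<integral>\<^sup>+ x. ennreal (exp (g x) / ?Z) \<partial>A) = ennreal (\<integral>x. exp (g x) / ?Z \<partial>A)"
    using i Z by (intro nn_integral_eq_integral) (auto intro!: AE_I2)
  also have "\<dots> = 1" using Z by simp
  finally show ?thesis unfolding is_density_def using m Z by auto
qed

lemma gibbs_shift:
  fixes r g :: "'x \<Rightarrow> real"
  assumes rm: "r \<in> borel_measurable A" and r0: "\<forall>x\<in>space A. 0 \<le> r x"
    and r1: "(\<integral>\<^sup>+ x. ennreal (r x) \<partial>A) = 1"
    and ie: "integrable A (\<lambda>x. exp (g x))"
    and il: "integrable A (\<lambda>x. r x * (g x - c - ln (r x)))"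
  shows "(\<integral>x. r x * (g x - c - ln (r x)) \<partial>A) \<le> ln (\<integral>x. exp (g x) \<partial>A) - c"
proof -
  have Z: "0 < (\<integral>x. exp (g x) \<partial>A)" by (rule Z_pos[OF rm r0 r1 ie])
  have e: "(\<lambda>x. exp (g x - c)) = (\<lambda>x. exp (g x) / exp c)" by (simp add: exp_diff)
  have ie': "integrable A (\<lambda>x. exp (g x - c))" unfolding e using ie by auto
  have "(\<integral>x. r x * ((g x - c) - ln (r x)) \<partial>A) \<le> ln (\<integral>x. exp (g x - c) \<partial>A)"
    by (rule gibbs[OF rm r0 r1 ie']) (use il in simp)
  also have "(\<integral>x. exp (g x - c) \<partial>A) = (\<integral>x. exp (g x) \<partial>A) / exp c" unfolding e by simp
  also have "ln \<dots> = ln (\<integral>x. exp (g x) \<partial>A) - c" using Z by (simp add: ln_div)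
  finally show ?thesis by simp
qed

lemma gibbs_opt:
  fixes g :: "'x \<Rightarrow> real"
  assumes ie: "integrable A (\<lambda>x. exp (g x))" and Z: "0 < (\<integral>x. exp (g x) \<partial>A)"
    and qo_def: "qo = (\<lambda>x. exp (g x) / (\<integral>y. exp (g y) \<partial>A))"
  shows "(\<integral>x. qo x * (g x - c - ln (qo x)) \<partial>A) = ln (\<integral>x. exp (g x) \<partial>A) - c"
proof -
  let ?Z = "(\<integral>x. exp (g x) \<partial>A)"
  have eq: "qo x * (g x - c - ln (qo x)) = qo x * (ln ?Z - c)" for x
    unfolding qo_def using Z by (simp add: ln_div)
  have "(\<integral>x. qo x * (g x - c - ln (qo x)) \<partial>A) = (\<integral>x. qo x * (ln ?Z - c) \<partial>A)"
    by (simp only: eq)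
  then have "(\<integral>x. qo x * (g x - c - ln (qo x)) \<partial>A) = (\<integral>x. qo x \<partial>A) * (ln ?Z - c)" by simp
  also have "(\<integral>x. qo x \<partial>A) = 1" unfolding qo_def using Z by simp
  finally show ?thesis by simp
qed



lemma part1:
  fixes K :: nat and M :: "nat \<Rightarrow> 'a measure" and N :: "'b measure"
    and C U :: "nat set"
    and p :: "(nat \<Rightarrow> 'a) \<Rightarrow> 'b \<Rightarrow> real"
    and qc :: "(nat \<Rightarrow> 'a) \<Rightarrow> real" and qu :: "nat \<Rightarrow> 'a \<Rightarrow> real" and qphi :: "'b \<Rightarrow> real"
  assumes partition: "C \<inter> U = {}" "C \<union> U = {0..K}"
    and sfM: "\<forall>k\<in>{0..K}. sigma_finite_measure (M k)"
    and sfN: "sigma_finite_measure N"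
    and p_meas: "(\<lambda>z. p (fst z) (snd z)) \<in> borel_measurable (ThetaM K M \<Otimes>\<^sub>M N)"
    and q: "in_QPF K M N C U qc qu qphi"
    and h1: "\<forall>\<phi>\<in>space N. integrable (ThetaM K M) (\<lambda>\<theta>. qtheta U qc qu \<theta> * ln (p \<theta> \<phi>))"
    and h2: "integrable N (\<lambda>\<phi>. exp (Etheta_logp K M U p qc qu \<phi>))"
    and h3: "elbo_finite K M N U p qc qu (opt_phi K M N U p qc qu)"
  shows "is_density N (opt_phi K M N U p qc qu)
       \<and> (\<forall>qphi'. is_density N qphi' \<and> elbo_finite K M N U p qc qu qphi'
            \<longrightarrow> elbo K M N U p qc qu qphi' \<le> elbo K M N U p qc qu (opt_phi K M N U p qc qu))"
proof -
  let ?T = "ThetaM K M"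
  let ?qt = "qtheta U qc qu"
  let ?E = "Etheta_logp K M U p qc qu"
  define Hu where "Hu = (\<integral>x. ?qt x * ln (?qt x) \<partial>?T)"
  have qphi: "is_density N qphi" and qc: "is_cond_density K M C U qc"
    and qu: "\<forall>k\<in>U. is_density (M k) (qu k)" using q unfolding in_QPF_def by auto
  note qt = qtheta_facts[OF partition sfM qc qu]
  note psf = psf_TN[OF sfM sfN]
  have Z: "0 < (\<integral>x. exp (?E x) \<partial>N)"
    using qphi h2 unfolding is_density_def by (intro Z_pos[of qphi]) auto
  have od: "is_density N (opt_phi K M N U p qc qu)"
    using density_from_exp[OF h2 Z] unfolding opt_phi_def[abs_def] by simp
  have split: "integrable N (\<lambda>y. r y * (?E y - Hu - ln (r y)))"
    "elbo K M N U p qc qu r = (\<integral>y. r y * (?E y - Hu - ln (r y)) \<partial>N)"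
    if r: "is_density N r" and fr: "elbo_finite K M N U p qc qu r" for r
  proof -
    note s = elbo_split_snd[OF psf qt(1) qt(2) qt(3), of r p]
    have rr: "r \<in> borel_measurable N" "\<forall>y\<in>space N. 0 \<le> r y" using r unfolding is_density_def by auto
    have i: "integrable (?T \<Otimes>\<^sub>M N) (\<lambda>z. (?qt (fst z) * r (snd z)) * ln (p (fst z) (snd z)))"
      "integrable (?T \<Otimes>\<^sub>M N) (\<lambda>z. (?qt (fst z) * r (snd z)) * ln (?qt (fst z) * r (snd z)))"
      using fr unfolding elbo_finite_def qjoint_def by auto
    note s' = s[OF rr p_meas i h1]
    show "integrable N (\<lambda>y. r y * (?E y - Hu - ln (r y)))"
      using s'(1) unfolding Hu_def Etheta_logp_def .
    show "elbo K M N U p qc qu r = (\<integral>y. r y * (?E y - Hu - ln (r y)) \<partial>N)"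
      using s'(2) unfolding Hu_def Etheta_logp_def elbo_def qjoint_def .
  qed
  have ub: "elbo K M N U p qc qu r \<le> ln (\<integral>x. exp (?E x) \<partial>N) - Hu"
    if r: "is_density N r" and fr: "elbo_finite K M N U p qc qu r" for r
    unfolding split(2)[OF r fr]
    using r split(1)[OF r fr] h2 unfolding is_density_def
    by (intro gibbs_shift) auto
  have eq: "elbo K M N U p qc qu (opt_phi K M N U p qc qu) = ln (\<integral>x. exp (?E x) \<partial>N) - Hu"
    unfolding split(2)[OF od h3]
    using gibbs_opt[OF h2 Z, of "opt_phi K M N U p qc qu" Hu] unfolding opt_phi_def[abs_def]
    by simp
  show ?thesis using od ub eq by simp
qed



lemma fiber_gibbs:
  fixes r g :: "'x \<Rightarrow> real" and w c :: real
  assumes rm: "r \<in> borel_measurable A" and r0: "\<forall>x\<in>space A. 0 \<le> r x"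
    and r1: "(\<integral>\<^sup>+ x. ennreal (r x) \<partial>A) = 1"
    and ie: "integrable A (\<lambda>x. exp (g x))" and w0: "0 \<le> w"
    and il: "integrable A (\<lambda>x. (r x * w) * (g x - c - ln (r x * w)))"
  shows "(\<integral>x. (r x * w) * (g x - c - ln (r x * w)) \<partial>A) \<le> w * (ln (\<integral>x. exp (g x) \<partial>A) - c - ln w)"
proof (cases "w = 0")
  case True then show ?thesis by simp
next
  case False
  then have wp: "0 < w" using w0 by simp
  have eq: "(r x * w) * (g x - c - ln (r x * w)) = w * (r x * (g x - (c + ln w) - ln (r x)))"
    if x: "x \<in> space A" for x
  proof (cases "r x = 0")
    case True then show ?thesis by simp
  next
    case False then have rp: "0 < r x" using r0 x by force
    have l: "ln (r x * w) = ln (r x) + ln w" using rp wp by (simp add: ln_mult)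
    show ?thesis unfolding l by (simp add: algebra_simps)
  qed
  have eq2: "r x * (g x - (c + ln w) - ln (r x)) = ((r x * w) * (g x - c - ln (r x * w))) / w"
    if x: "x \<in> space A" for x using wp by (subst eq[OF x]) simp
  have iJ: "integrable A (\<lambda>x. r x * (g x - (c + ln w) - ln (r x)))"
    using Bochner_Integration.integrable_cong[OF refl eq2, of A] integrable_divide_zero[OF il, of w]
    by (simp only:)
  have "(\<integral>x. (r x * w) * (g x - c - ln (r x * w)) \<partial>A) = (\<integral>x. w * (r x * (g x - (c + ln w) - ln (r x))) \<partial>A)"
    by (rule Bochner_Integration.integral_cong[OF refl eq])
  also have "\<dots> = w * (\<integral>x. r x * (g x - (c + ln w) - ln (r x)) \<partial>A)" by simp
  also have "\<dots> \<le> w * (ln (\<integral>x. exp (g x) \<partial>A) - (c + ln w))"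
    using gibbs_shift[OF rm r0 r1 ie iJ] wp by (intro mult_left_mono) auto
  also have "\<dots> = w * (ln (\<integral>x. exp (g x) \<partial>A) - c - ln w)" by (simp add: algebra_simps)
  finally show ?thesis .
qed

lemma fiber_opt:
  fixes g :: "'x \<Rightarrow> real" and w c Z :: real
  assumes ie: "integrable A (\<lambda>x. exp (g x))" and ZZ: "Z = (\<integral>x. exp (g x) \<partial>A)" and Z: "0 < Z"
    and w0: "0 \<le> w"
  shows "(\<integral>x. ((exp (g x) / Z) * w) * (g x - c - ln ((exp (g x) / Z) * w)) \<partial>A) = w * (ln Z - c - ln w)"
proof (cases "w = 0")
  case True then show ?thesis by simp
next
  case False
  then have wp: "0 < w" using w0 by simp
  have eq: "((exp (g x) / Z) * w) * (g x - c - ln ((exp (g x) / Z) * w)) = (exp (g x) / Z) * (w * (ln Z - c - ln w))" for x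
  proof -
    have l: "ln ((exp (g x) / Z) * w) = g x - ln Z + ln w" using wp Z by (simp add: ln_mult ln_div)
    show ?thesis unfolding l by algebra
  qed
  have "(\<integral>x. ((exp (g x) / Z) * w) * (g x - c - ln ((exp (g x) / Z) * w)) \<partial>A)
      = (\<integral>x. (exp (g x) / Z) * (w * (ln Z - c - ln w)) \<partial>A)" by (simp only: eq)
  also have "\<dots> = (\<integral>x. exp (g x) / Z \<partial>A) * (w * (ln Z - c - ln w))" by simp
  also have "(\<integral>x. exp (g x) / Z \<partial>A) = 1" using Z ZZ by simp
  finally show ?thesis by simp
qed

lemma merge_integral:
  fixes V :: "_ \<Rightarrow> real"
  assumes sf: "\<forall>k\<in>S. sigma_finite_measure (M k)" and CS: "C \<subseteq> S" and US: "U \<subseteq> S"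
    and fC: "finite C" and fU: "finite U" and CU: "C \<inter> U = {}"
    and V: "integrable (PiM (C \<union> U) M) V"
  shows "integrable (PiM C M \<Otimes>\<^sub>M PiM U M) (\<lambda>z. V (merge C U z))"
    "integral\<^sup>L (PiM (C \<union> U) M) V = (\<integral>z. V (merge C U z) \<partial>(PiM C M \<Otimes>\<^sub>M PiM U M))"
proof -
  note d = distr_merge'[OF sf CS US CU fC fU]
  have Vm: "V \<in> borel_measurable (PiM (C \<union> U) M)" using V by auto
  show "integrable (PiM C M \<Otimes>\<^sub>M PiM U M) (\<lambda>z. V (merge C U z))"
    using V by (intro integrable_distr[OF measurable_merge]) (simp add: d)
  have "integral\<^sup>L (PiM (C \<union> U) M) V = integral\<^sup>L (distr (PiM C M \<Otimes>\<^sub>M PiM U M) (PiM (C \<union> U) M) (merge C U)) V"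
    by (simp add: d)
  also have "\<dots> = (\<integral>z. V (merge C U z) \<partial>(PiM C M \<Otimes>\<^sub>M PiM U M))"
    by (rule integral_distr[OF measurable_merge Vm])
  finally show "integral\<^sup>L (PiM (C \<union> U) M) V = (\<integral>z. V (merge C U z) \<partial>(PiM C M \<Otimes>\<^sub>M PiM U M))" .
qed



lemma psf_NT:
  assumes sfM: "\<forall>k\<in>{0..K}. sigma_finite_measure (M k)" and sfN: "sigma_finite_measure N"
  shows "pair_sigma_finite N (ThetaM K M)"
  using sf_PiM[OF sfM, of "{0..K}"] sfN unfolding ThetaM_def by (simp add: pair_sigma_finite_def)

lemma theta_split:
  fixes K :: nat and M :: "nat \<Rightarrow> 'a measure" and N :: "'b measure"
    and C U :: "nat set"
    and p :: "(nat \<Rightarrow> 'a) \<Rightarrow> 'b \<Rightarrow> real"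
    and qc :: "(nat \<Rightarrow> 'a) \<Rightarrow> real" and qu :: "nat \<Rightarrow> 'a \<Rightarrow> real" and qphi :: "'b \<Rightarrow> real"
  assumes partition: "C \<inter> U = {}" "C \<union> U = {0..K}"
    and sfM: "\<forall>k\<in>{0..K}. sigma_finite_measure (M k)"
    and sfN: "sigma_finite_measure N"
    and p_meas: "(\<lambda>z. p (fst z) (snd z)) \<in> borel_measurable (ThetaM K M \<Otimes>\<^sub>M N)"
    and qc: "is_cond_density K M C U qc" and qu: "\<forall>k\<in>U. is_density (M k) (qu k)"
    and qphi: "is_density N qphi"
    and h1: "\<forall>\<theta>\<in>space (ThetaM K M). integrable N (\<lambda>\<phi>. qphi \<phi> * ln (p \<theta> \<phi>))"
    and fr: "elbo_finite K M N U p qc qu qphi"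
  shows "integrable (ThetaM K M) (\<lambda>\<theta>. qtheta U qc qu \<theta> * (Ephi_logp N p qphi \<theta>
            - (\<integral>y. qphi y * ln (qphi y) \<partial>N) - ln (qtheta U qc qu \<theta>)))"
    "elbo K M N U p qc qu qphi = (\<integral>\<theta>. qtheta U qc qu \<theta> * (Ephi_logp N p qphi \<theta>
            - (\<integral>y. qphi y * ln (qphi y) \<partial>N) - ln (qtheta U qc qu \<theta>)) \<partial>ThetaM K M)"
proof -
  note qt = qtheta_facts[OF partition sfM qc qu]
  note psf = psf_TN[OF sfM sfN]
  have qq: "qphi \<in> borel_measurable N" "\<forall>y\<in>space N. 0 \<le> qphi y" "(\<integral>\<^sup>+ y. ennreal (qphi y) \<partial>N) = 1"
    using qphi unfolding is_density_def by auto
  have i: "integrable (ThetaM K M \<Otimes>\<^sub>M N) (\<lambda>z. (qtheta U qc qu (fst z) * qphi (snd z)) * ln (p (fst z) (snd z)))"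
      "integrable (ThetaM K M \<Otimes>\<^sub>M N) (\<lambda>z. (qtheta U qc qu (fst z) * qphi (snd z)) * ln (qtheta U qc qu (fst z) * qphi (snd z)))"
    using fr unfolding elbo_finite_def qjoint_def by auto
  note s = elbo_split_fst[OF psf qt(1) qt(2) qq p_meas i h1]
  show "integrable (ThetaM K M) (\<lambda>\<theta>. qtheta U qc qu \<theta> * (Ephi_logp N p qphi \<theta>
            - (\<integral>y. qphi y * ln (qphi y) \<partial>N) - ln (qtheta U qc qu \<theta>)))"
    using s(1) unfolding Ephi_logp_def .
  show "elbo K M N U p qc qu qphi = (\<integral>\<theta>. qtheta U qc qu \<theta> * (Ephi_logp N p qphi \<theta>
            - (\<integral>y. qphi y * ln (qphi y) \<partial>N) - ln (qtheta U qc qu \<theta>)) \<partial>ThetaM K M)"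
    using s(2) unfolding Ephi_logp_def elbo_def qjoint_def .
qed

lemma qtheta_merge:
  "C \<inter> U = {} \<Longrightarrow> qtheta U qc qu (merge C U (a, b)) = qc (merge C U (a, b)) * (\<Prod>k\<in>U. qu k (b k))"
  unfolding qtheta_def by simp

lemma to_B:
  fixes V :: "_ \<Rightarrow> real"
  assumes partition: "C \<inter> U = {}" "C \<union> U = {0..K}"
    and sfM: "\<forall>k\<in>{0..K}. sigma_finite_measure (M k)"
    and V: "integrable (ThetaM K M) V"
  shows "integrable (PiM C M \<Otimes>\<^sub>M PiM U M) (\<lambda>z. V (merge C U z))"
    "integral\<^sup>L (ThetaM K M) V = (\<integral>z. V (merge C U z) \<partial>(PiM C M \<Otimes>\<^sub>M PiM U M))"
proof -
  have fin: "finite C" "finite U" using partition(2) finite_subset[of _ "{0..K}"] by auto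
  have sub: "C \<subseteq> {0..K}" "U \<subseteq> {0..K}" using partition(2) by auto
  note T = Theta_eq[OF partition(2), of M]
  show "integrable (PiM C M \<Otimes>\<^sub>M PiM U M) (\<lambda>z. V (merge C U z))"
    "integral\<^sup>L (ThetaM K M) V = (\<integral>z. V (merge C U z) \<partial>(PiM C M \<Otimes>\<^sub>M PiM U M))"
    using merge_integral[OF sfM sub fin partition(1), of V] V unfolding T by auto
qed



locale setting =
  fixes K :: nat and M :: "nat \<Rightarrow> 'a measure" and N :: "'b measure"
    and C U :: "nat set"
    and p :: "(nat \<Rightarrow> 'a) \<Rightarrow> 'b \<Rightarrow> real"
    and qc :: "(nat \<Rightarrow> 'a) \<Rightarrow> real" and qu :: "nat \<Rightarrow> 'a \<Rightarrow> real" and qphi :: "'b \<Rightarrow> real"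
  assumes partition: "C \<inter> U = {}" "C \<union> U = {0..K}"
    and sfM: "\<forall>k\<in>{0..K}. sigma_finite_measure (M k)"
    and sfN: "sigma_finite_measure N"
    and p_meas: "(\<lambda>z. p (fst z) (snd z)) \<in> borel_measurable (ThetaM K M \<Otimes>\<^sub>M N)"
    and q: "in_QPF K M N C U qc qu qphi"
    and h1: "\<forall>\<theta>\<in>space (ThetaM K M). integrable N (\<lambda>\<phi>. qphi \<phi> * ln (p \<theta> \<phi>))"
    and h2: "\<forall>\<theta>U\<in>space (PiM U M).
          integrable (PiM C M) (\<lambda>\<theta>C. exp (Ephi_logp N p qphi (merge C U (\<theta>C, \<theta>U))))"
begin

abbreviation "T \<equiv> ThetaM K M"
abbreviation "A \<equiv> PiM C M"
abbreviation "B \<equiv> PiM U M"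
abbreviation "Eph \<equiv> Ephi_logp N p qphi"
abbreviation "Hphi \<equiv> (\<integral>y. qphi y * ln (qphi y) \<partial>N)"
abbreviation "Zb \<equiv> Zc M N C U p qphi"
abbreviation "opt \<equiv> opt_cond M N C U p qphi"

lemma fin: "finite C" "finite U" using partition(2) finite_subset[of _ "{0..K}"] by auto
lemma sub: "C \<subseteq> {0..K}" "U \<subseteq> {0..K}" using partition(2) by auto
lemma T_eq: "T = PiM (C \<union> U) M" by (rule Theta_eq[OF partition(2)])

lemma qphi_d: "is_density N qphi" using q unfolding in_QPF_def by auto
lemma qc_d: "is_cond_density K M C U qc" using q unfolding in_QPF_def by auto
lemma qu_d: "\<forall>k\<in>U. is_density (M k) (qu k)" using q unfolding in_QPF_def by auto

lemma psfAB: "pair_sigma_finite A B" by (rule psf_PiM[OF sfM sub(1) fin(1) sub(2) fin(2)])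
lemma sfA: "sigma_finite_measure A" by (rule sf_PiM[OF sfM sub(1) fin(1)])
lemma sfB: "sigma_finite_measure B" by (rule sf_PiM[OF sfM sub(2) fin(2)])

lemma merge_T: "b \<in> space B \<Longrightarrow> (\<lambda>a. merge C U (a,b)) \<in> measurable A T"
  unfolding T_eq by (rule merge_meas_fst)

lemma merge_T2: "merge C U \<in> measurable (A \<Otimes>\<^sub>M B) T"
  unfolding T_eq by (rule measurable_merge)

lemma Eph_meas: "Eph \<in> borel_measurable T"
proof -
  interpret sN: sigma_finite_measure N by (rule sfN)
  have qm[measurable]: "qphi \<in> borel_measurable N" using qphi_d unfolding is_density_def by auto
  note p_meas[measurable]
  have "(\<lambda>z. qphi (snd z) * ln (p (fst z) (snd z))) \<in> borel_measurable (T \<Otimes>\<^sub>M N)" by measurable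
  then have "(\<lambda>(\<theta>, \<phi>). qphi \<phi> * ln (p \<theta> \<phi>)) \<in> borel_measurable (T \<Otimes>\<^sub>M N)" by (simp add: split_beta)
  from sN.borel_measurable_lebesgue_integral[OF this] show ?thesis
    unfolding Ephi_logp_def[abs_def] by simp
qed

lemma Zb_meas: "Zb \<in> borel_measurable B"
proof -
  interpret sA: sigma_finite_measure A by (rule sfA)
  have "(\<lambda>z. exp (Eph (merge C U z))) \<in> borel_measurable (A \<Otimes>\<^sub>M B)"
    using measurable_compose[OF merge_T2 Eph_meas] by measurable
  from measurable_pair_swap[OF this]
  have "(\<lambda>(b, a). exp (Eph (merge C U (a, b)))) \<in> borel_measurable (B \<Otimes>\<^sub>M A)" by (simp add: split_beta)
  from sA.borel_measurable_lebesgue_integral[OF this] show ?thesis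
    unfolding Zc_def[abs_def] by simp
qed

lemma qc_fiber:
  assumes b: "b \<in> space B"
  shows "(\<lambda>a. qc (merge C U (a,b))) \<in> borel_measurable A" "\<forall>a\<in>space A. 0 \<le> qc (merge C U (a,b))"
    "(\<integral>\<^sup>+ a. ennreal (qc (merge C U (a,b))) \<partial>A) = 1"
  using qc_d measurable_compose[OF merge_T[OF b]] measurable_space[OF merge_T[OF b]] b
  unfolding is_cond_density_def by auto

lemma Zb_pos: "b \<in> space B \<Longrightarrow> 0 < Zb b"
  unfolding Zc_def using Z_pos[OF qc_fiber] h2 by auto

lemma opt_merge: "b \<in> space B \<Longrightarrow> opt (merge C U (a,b)) = exp (Eph (merge C U (a,b))) / Zb b"
proof -
  assume b: "b \<in> space B"
  then have "b \<in> extensional U" by (simp add: space_PiM PiE_def)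
  then have "restrict (merge C U (a,b)) U = b" using partition(1) by (simp add: extensional_restrict)
  then show ?thesis unfolding opt_cond_def by simp
qed

lemma opt_density: "is_cond_density K M C U opt"
proof -
  have rm: "(\<lambda>\<theta>. restrict \<theta> U) \<in> measurable T B"
    unfolding T_eq by (rule measurable_restrict_subset) auto
  have m: "opt \<in> borel_measurable T"
    unfolding opt_cond_def[abs_def]
    using Eph_meas measurable_compose[OF rm Zb_meas] by measurable
  have nn: "0 \<le> Zb b" for b unfolding Zc_def by (rule integral_nonneg_AE) simp
  have n: "\<forall>\<theta>\<in>space T. 0 \<le> opt \<theta>" unfolding opt_cond_def using nn by simp
  have f: "(\<integral>\<^sup>+ a. ennreal (opt (merge C U (a,b))) \<partial>A) = 1" if b: "b \<in> space B" for b
    using density_from_exp[of A "\<lambda>a. Eph (merge C U (a,b))"] h2 b Zb_pos[OF b]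
    unfolding opt_merge[OF b] is_density_def Zc_def by auto
  show ?thesis unfolding is_cond_density_def using m n f by auto
qed

definition V :: "((nat \<Rightarrow> 'a) \<Rightarrow> real) \<Rightarrow> (nat \<Rightarrow> 'a \<Rightarrow> real) \<Rightarrow> (nat \<Rightarrow> 'a) \<Rightarrow> real" where
  "V qc' qu' \<theta> = qtheta U qc' qu' \<theta> * (Eph \<theta> - Hphi - ln (qtheta U qc' qu' \<theta>))"

definition Fib :: "((nat \<Rightarrow> 'a) \<Rightarrow> real) \<Rightarrow> (nat \<Rightarrow> 'a \<Rightarrow> real) \<Rightarrow> (nat \<Rightarrow> 'a) \<Rightarrow> real" where
  "Fib qc' qu' b = (\<integral>a. V qc' qu' (merge C U (a,b)) \<partial>A)"

lemma elbo_B: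
  assumes qc': "is_cond_density K M C U qc'" and qu': "\<forall>k\<in>U. is_density (M k) (qu' k)"
    and fr: "elbo_finite K M N U p qc' qu' qphi"
  shows "elbo K M N U p qc' qu' qphi = (\<integral>b. Fib qc' qu' b \<partial>B)"
    "integrable B (Fib qc' qu')"
    "AE b in B. integrable A (\<lambda>a. V qc' qu' (merge C U (a,b)))"
proof -
  note ts = theta_split[OF partition sfM sfN p_meas qc' qu' qphi_d h1 fr]
  have iT: "integrable T (V qc' qu')" using ts(1) unfolding V_def[abs_def] .
  note tb = to_B[OF partition sfM iT]
  interpret P: pair_sigma_finite A B by (rule psfAB)
  have cp: "(\<lambda>(a,b). V qc' qu' (merge C U (a,b))) = (\<lambda>z. V qc' qu' (merge C U z))" by auto
  have I: "integrable (A \<Otimes>\<^sub>M B) (case_prod (\<lambda>a b. V qc' qu' (merge C U (a,b))))"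
    using tb(1) by (simp add: cp)
  show "AE b in B. integrable A (\<lambda>a. V qc' qu' (merge C U (a,b)))"
    using P.AE_integrable_snd[OF I] .
  show "integrable B (Fib qc' qu')" unfolding Fib_def[abs_def] using P.integrable_snd[OF I] .
  have "elbo K M N U p qc' qu' qphi = integral\<^sup>L T (V qc' qu')" using ts(2) unfolding V_def[abs_def] .
  also have "\<dots> = (\<integral>z. V qc' qu' (merge C U z) \<partial>(A \<Otimes>\<^sub>M B))" by (rule tb(2))
  also have "\<dots> = (\<integral>b. Fib qc' qu' b \<partial>B)" unfolding Fib_def using P.integral_snd[OF I] cp by simp
  finally show "elbo K M N U p qc' qu' qphi = (\<integral>b. Fib qc' qu' b \<partial>B)" .
qed

lemma V_merge: "V qc' qu' (merge C U (a,b)) =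
   (qc' (merge C U (a,b)) * (\<Prod>k\<in>U. qu' k (b k))) * (Eph (merge C U (a,b)) - Hphi - ln (qc' (merge C U (a,b)) * (\<Prod>k\<in>U. qu' k (b k))))"
  unfolding V_def by (simp only: qtheta_merge[OF partition(1)])

lemma w_nonneg:
  assumes qu': "\<forall>k\<in>U. is_density (M k) (qu' k)" and b: "b \<in> space B"
  shows "0 \<le> (\<Prod>k\<in>U. qu' k (b k))"
  using prod_nonneg'[of U U M qu' b] qu' b unfolding is_density_def by auto

lemma Fib_opt:
  assumes qu': "\<forall>k\<in>U. is_density (M k) (qu' k)" and b: "b \<in> space B"
  shows "Fib opt qu' b = (\<Prod>k\<in>U. qu' k (b k)) * (ln (Zb b) - Hphi - ln (\<Prod>k\<in>U. qu' k (b k)))"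
  unfolding Fib_def V_merge opt_merge[OF b]
  by (rule fiber_opt) (use h2 b Zb_pos[OF b] w_nonneg[OF qu' b] in \<open>auto simp: Zc_def\<close>)

lemma Fib_le:
  assumes qc': "is_cond_density K M C U qc'" and b: "b \<in> space B"
    and i: "integrable A (\<lambda>a. V qc' qu (merge C U (a,b)))"
  shows "Fib qc' qu b \<le> (\<Prod>k\<in>U. qu k (b k)) * (ln (Zb b) - Hphi - ln (\<Prod>k\<in>U. qu k (b k)))"
proof -
  have r: "(\<lambda>a. qc' (merge C U (a,b))) \<in> borel_measurable A" "\<forall>a\<in>space A. 0 \<le> qc' (merge C U (a,b))"
    "(\<integral>\<^sup>+ a. ennreal (qc' (merge C U (a,b))) \<partial>A) = 1"
    using qc' measurable_compose[OF merge_T[OF b]] measurable_space[OF merge_T[OF b]] b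
    unfolding is_cond_density_def by auto
  show ?thesis
    unfolding Fib_def Zc_def
    using fiber_gibbs[OF r, of "\<lambda>a. Eph (merge C U (a,b))" "\<Prod>k\<in>U. qu k (b k)" Hphi]
      h2 b w_nonneg[OF qu_d b] i unfolding V_merge by auto
qed

end



lemma lin_fiber:
  fixes P L :: "'x \<Rightarrow> real" and s c :: real
  assumes Pm: "P \<in> borel_measurable X" and P0: "\<forall>x\<in>space X. 0 \<le> P x"
    and P1: "(\<integral>\<^sup>+ x. ennreal (P x) \<partial>X) = 1"
    and iL: "integrable X (\<lambda>x. P x * L x)" and s0: "0 \<le> s"
    and i: "integrable X (\<lambda>x. (s * P x) * (L x - c - ln (s * P x)))"
  shows "(\<integral>x. (s * P x) * (L x - c - ln (s * P x)) \<partial>X)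
       = s * ((\<integral>x. P x * L x \<partial>X) - c - (\<integral>x. P x * ln (P x) \<partial>X) - ln s)"
proof (cases "s = 0")
  case True then show ?thesis by simp
next
  case False
  then have sp: "0 < s" using s0 by simp
  have Pi: "integrable X P" "integral\<^sup>L X P = 1" using density_integrable[OF Pm P0 P1] by auto
  have eq: "(s * P x) * (L x - c - ln (s * P x)) = s * (P x * L x - (c + ln s) * P x - P x * ln (P x))"
    if x: "x \<in> space X" for x
  proof (cases "P x = 0")
    case True then show ?thesis by simp
  next
    case False then have pp: "0 < P x" using P0 x by force
    have l: "ln (s * P x) = ln s + ln (P x)" using pp sp by (simp add: ln_mult)
    show ?thesis unfolding l by (simp add: algebra_simps)
  qed
  have eq2: "P x * ln (P x) = P x * L x - (c + ln s) * P x - ((s * P x) * (L x - c - ln (s * P x))) / s"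
    if x: "x \<in> space X" for x using sp by (subst eq[OF x]) simp
  have "integrable X (\<lambda>x. P x * L x - (c + ln s) * P x - ((s * P x) * (L x - c - ln (s * P x))) / s)"
    using iL Pi integrable_divide_zero[OF i, of s] by (intro Bochner_Integration.integrable_diff) auto
  then have iP: "integrable X (\<lambda>x. P x * ln (P x))"
    using Bochner_Integration.integrable_cong[OF refl eq2, of X] by (simp only:)
  have "(\<integral>x. (s * P x) * (L x - c - ln (s * P x)) \<partial>X)
      = (\<integral>x. s * (P x * L x - (c + ln s) * P x - P x * ln (P x)) \<partial>X)"
    by (rule Bochner_Integration.integral_cong[OF refl eq])
  also have "\<dots> = s * ((\<integral>x. P x * L x \<partial>X) - (c + ln s) * (\<integral>x. P x \<partial>X) - (\<integral>x. P x * ln (P x) \<partial>X))"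
    using iL Pi iP by (simp add: Bochner_Integration.integral_diff Bochner_Integration.integrable_diff)
  also have "\<dots> = s * ((\<integral>x. P x * L x \<partial>X) - c - (\<integral>x. P x * ln (P x) \<partial>X) - ln s)"
    using Pi by (simp add: algebra_simps)
  finally show ?thesis .
qed

lemma distr_singleton':
  assumes "\<forall>k\<in>S. sigma_finite_measure (M k)" "i \<in> S"
  shows "distr (Pi\<^sub>M {i} M) (M i) (\<lambda>x. x i) = M i"
proof -
  interpret product_sigma_finite "extM S M" using psf_extM[OF assms(1)] .
  have e: "extM S M i = M i" using assms(2) unfolding extM_def by auto
  have p: "PiM {i} (extM S M) = PiM {i} M" using PiM_extM[of "{i}" S M] assms(2) by blast
  show ?thesis using distr_singleton[of i] unfolding p e .
qed

lemma integrable_singleton':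
  fixes f :: "'a \<Rightarrow> real"
  assumes "\<forall>k\<in>S. sigma_finite_measure (M k)" "i \<in> S" "f \<in> borel_measurable (M i)"
    and "integrable (Pi\<^sub>M {i} M) (\<lambda>x. f (x i))"
  shows "integrable (M i) f"
proof -
  have m: "(\<lambda>x. x i) \<in> measurable (Pi\<^sub>M {i} M) (M i)" by simp
  show ?thesis using integrable_distr_eq[OF m assms(3)] assms(4) distr_singleton'[OF assms(1,2)] by simp
qed

context setting begin

lemma part2:
  assumes h3: "elbo_finite K M N U p opt qu qphi"
  shows "is_cond_density K M C U opt
       \<and> (\<forall>qc'. is_cond_density K M C U qc' \<and> elbo_finite K M N U p qc' qu qphi
            \<longrightarrow> elbo K M N U p qc' qu qphi \<le> elbo K M N U p opt qu qphi)"
proof -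
  have le: "elbo K M N U p qc' qu qphi \<le> elbo K M N U p opt qu qphi"
    if qc': "is_cond_density K M C U qc'" and fr: "elbo_finite K M N U p qc' qu qphi" for qc'
  proof -
    note e1 = elbo_B[OF qc' qu_d fr] and e2 = elbo_B[OF opt_density qu_d h3]
    have "AE b in B. Fib qc' qu b \<le> Fib opt qu b"
      using e1(3) AE_space
    proof eventually_elim
      case (elim b)
      then show ?case using Fib_le[OF qc' elim(2) elim(1)] Fib_opt[OF qu_d elim(2)] by simp
    qed
    then show ?thesis unfolding e1(1) e2(1) using e1(2) e2(2) by (intro integral_mono_AE) auto
  qed
  show ?thesis using opt_density le by blast
qed

end



context setting begin

definition Gr :: "(nat \<Rightarrow> 'a \<Rightarrow> real) \<Rightarrow> (nat \<Rightarrow> 'a) \<Rightarrow> real" where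
  "Gr qu' b = (\<Prod>m\<in>U. qu' m (b m)) * (ln (Zb b) - Hphi - ln (\<Prod>m\<in>U. qu' m (b m)))"

lemma Gr_restrict: "Gr qu' (restrict f U) = Gr qu' f"
proof -
  have "Zb (restrict f U) = Zb f" unfolding Zc_def by simp
  moreover have "(\<Prod>m\<in>U. qu' m (restrict f U m)) = (\<Prod>m\<in>U. qu' m (f m))" by (rule prod.cong) auto
  ultimately show ?thesis unfolding Gr_def by simp
qed

lemma Gr_meas:
  assumes qu': "\<forall>k\<in>U. is_density (M k) (qu' k)"
  shows "Gr qu' \<in> borel_measurable B"
proof -
  have "(\<lambda>b. \<Prod>m\<in>U. qu' m (b m)) \<in> borel_measurable B"
    using prod_meas[of U U qu' M] qu' unfolding is_density_def by auto
  then show ?thesis unfolding Gr_def[abs_def] using Zb_meas by measurable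
qed

lemma elbo_block:
  assumes k: "k \<in> U"
    and h4: "\<forall>x\<in>space (M k). integrable (PiM (U - {k}) M)
          (\<lambda>\<theta>r. (\<Prod>m\<in>U - {k}. qu m (\<theta>r m)) * ln (Zc M N C U p qphi (\<theta>r(k := x))))"
    and h5: "integrable (M k) (\<lambda>x. exp (Erest_logZ M N C U p qu qphi k x))"
    and r: "is_density (M k) r"
    and fr: "elbo_finite K M N U p opt (qu(k := r)) qphi"
  shows "integrable (M k) (\<lambda>x. r x * (Erest_logZ M N C U p qu qphi k x
            - (Hphi + (\<integral>\<theta>r. (\<Prod>m\<in>U - {k}. qu m (\<theta>r m)) * ln (\<Prod>m\<in>U - {k}. qu m (\<theta>r m)) \<partial>PiM (U - {k}) M))
            - ln (r x)))"
    "elbo K M N U p opt (qu(k := r)) qphi = (\<integral>x. r x * (Erest_logZ M N C U p qu qphi k x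
            - (Hphi + (\<integral>\<theta>r. (\<Prod>m\<in>U - {k}. qu m (\<theta>r m)) * ln (\<Prod>m\<in>U - {k}. qu m (\<theta>r m)) \<partial>PiM (U - {k}) M))
            - ln (r x)) \<partial>M k)"
proof -
  define U' where "U' = U - {k}"
  define Pk where "Pk = (\<lambda>\<theta>r. \<Prod>m\<in>U'. qu m (\<theta>r m))"
  define HP where "HP = (\<integral>\<theta>r. Pk \<theta>r * ln (Pk \<theta>r) \<partial>PiM U' M)"
  define Er where "Er = Erest_logZ M N C U p qu qphi k"
  define H where "H = (\<lambda>x. r x * (Er x - (Hphi + HP) - ln (r x)))"
  let ?qur = "qu(k := r)"
  have qur: "\<forall>m\<in>U. is_density (M m) (?qur m)" using qu_d r by auto
  have rm: "r \<in> borel_measurable (M k)" using r unfolding is_density_def by auto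
  have kS: "k \<in> {0..K}" using k sub by auto
  have U'S: "U' \<subseteq> {0..K}" using sub unfolding U'_def by auto
  have fU': "finite U'" using fin unfolding U'_def by auto
  have UU: "U' \<union> {k} = U" using k unfolding U'_def by auto
  note e = elbo_B[OF opt_density qur fr]
  have FG: "Fib opt ?qur b = Gr ?qur b" if "b \<in> space B" for b
    using Fib_opt[OF qur that] unfolding Gr_def .
  have iGr: "integrable B (Gr ?qur)"
    using e(2) Gr_meas[OF qur] FG by (subst Bochner_Integration.integrable_cong[OF refl FG, symmetric]) auto
  have el: "elbo K M N U p opt ?qur qphi = integral\<^sup>L B (Gr ?qur)"
    unfolding e(1) by (rule Bochner_Integration.integral_cong[OF refl FG])
  have iGr': "integrable (PiM (U' \<union> {k}) M) (Gr ?qur)" using iGr unfolding UU .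
  note mi = merge_integral[OF sfM U'S _ fU' _ _ iGr'] 
  have mi1: "integrable (PiM U' M \<Otimes>\<^sub>M PiM {k} M) (\<lambda>z. Gr ?qur (merge U' {k} z))"
    using mi(1) kS unfolding U'_def by auto
  have mi2: "integral\<^sup>L B (Gr ?qur) = (\<integral>z. Gr ?qur (merge U' {k} z) \<partial>(PiM U' M \<Otimes>\<^sub>M PiM {k} M))"
    using mi(2) kS UU unfolding U'_def by auto
  have psf': "pair_sigma_finite (PiM U' M) (PiM {k} M)"
    by (rule psf_PiM[OF sfM U'S fU']) (use kS in auto)
  have Erm: "Er \<in> borel_measurable (M k)"
  proof -
    have "(\<lambda>x. exp (Er x)) \<in> borel_measurable (M k)" using h5 unfolding Er_def by auto
    then have "(\<lambda>x. ln (exp (Er x))) \<in> borel_measurable (M k)" by measurable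
    then show ?thesis by simp
  qed
  have Hm: "H \<in> borel_measurable (M k)" unfolding H_def using Erm rm by measurable
  have Hm': "(\<lambda>y. H (y k)) \<in> borel_measurable (PiM {k} M)"
    using measurable_compose[OF _ Hm, of "\<lambda>y. y k" "PiM {k} M"] by simp
  have Pkm: "Pk \<in> borel_measurable (PiM U' M)"
    unfolding Pk_def using prod_meas[of U' U' qu M] qu_d unfolding is_density_def U'_def by auto
  have Pk0: "\<forall>x\<in>space (PiM U' M). 0 \<le> Pk x"
    unfolding Pk_def using prod_nonneg'[of U' U' M qu] qu_d unfolding is_density_def U'_def by auto
  have Pk1: "(\<integral>\<^sup>+ x. ennreal (Pk x) \<partial>PiM U' M) = 1"
    unfolding Pk_def using prod_density[OF sfM U'S fU', of qu] qu_d unfolding is_density_def U'_def by auto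
  have fib: "(\<integral>\<theta>r. Gr ?qur (merge U' {k} (\<theta>r, y)) \<partial>PiM U' M) = H (y k)"
    if y: "y \<in> space (PiM {k} M)" and fi: "integrable (PiM U' M) (\<lambda>\<theta>r. Gr ?qur (merge U' {k} (\<theta>r, y)))" for y
  proof -
    define x where "x = y k"
    have x: "x \<in> space (M k)" using y unfolding x_def by (auto simp: space_PiM)
    have kU': "k \<notin> U'" unfolding U'_def by auto
    have w: "(\<Prod>m\<in>U. ?qur m ((\<theta>r(k := x)) m)) = r x * Pk \<theta>r" for \<theta>r
    proof -
      have "(\<Prod>m\<in>U. ?qur m ((\<theta>r(k := x)) m)) = ?qur k ((\<theta>r(k := x)) k) * (\<Prod>m\<in>U - {k}. ?qur m ((\<theta>r(k := x)) m))"
        by (rule prod.remove[OF fin(2) k])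
      also have "?qur k ((\<theta>r(k := x)) k) = r x" by simp
      also have "(\<Prod>m\<in>U - {k}. ?qur m ((\<theta>r(k := x)) m)) = Pk \<theta>r"
        unfolding Pk_def U'_def by (rule prod.cong) auto
      finally show ?thesis by simp
    qed
    have gm: "Gr ?qur (merge U' {k} (\<theta>r, y)) = (r x * Pk \<theta>r) * (ln (Zb (\<theta>r(k := x))) - Hphi - ln (r x * Pk \<theta>r))" for \<theta>r
    proof -
      have "merge U' {k} (\<theta>r, y) = restrict (\<theta>r(k := x)) U"
        using merge_singleton[OF kU', of \<theta>r y] UU unfolding x_def by (simp add: insert_absorb Un_commute)
      then have "Gr ?qur (merge U' {k} (\<theta>r, y)) = Gr ?qur (\<theta>r(k := x))" by (simp add: Gr_restrict)
      then show ?thesis unfolding Gr_def w .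
    qed
    have iL: "integrable (PiM U' M) (\<lambda>\<theta>r. Pk \<theta>r * ln (Zb (\<theta>r(k := x))))"
      using h4 x unfolding Pk_def U'_def by auto
    have r0: "0 \<le> r x" using r x unfolding is_density_def by auto
    have fi': "integrable (PiM U' M) (\<lambda>\<theta>r. (r x * Pk \<theta>r) * (ln (Zb (\<theta>r(k := x))) - Hphi - ln (r x * Pk \<theta>r)))"
      using fi unfolding gm .
    have "(\<integral>\<theta>r. Gr ?qur (merge U' {k} (\<theta>r, y)) \<partial>PiM U' M)
        = (\<integral>\<theta>r. (r x * Pk \<theta>r) * (ln (Zb (\<theta>r(k := x))) - Hphi - ln (r x * Pk \<theta>r)) \<partial>PiM U' M)"
      unfolding gm ..
    also have "\<dots> = r x * ((\<integral>\<theta>r. Pk \<theta>r * ln (Zb (\<theta>r(k := x))) \<partial>PiM U' M) - Hphi - HP - ln (r x))"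
      unfolding HP_def by (rule lin_fiber[OF Pkm Pk0 Pk1 iL r0 fi'])
    also have "\<dots> = H (y k)"
      unfolding H_def Er_def Erest_logZ_def x_def[symmetric] Pk_def U'_def by (simp add: algebra_simps)
    finally show ?thesis .
  qed
  note fs = fiber_snd[OF psf' mi1 Hm' fib]
  have iH: "integrable (M k) H" by (rule integrable_singleton'[OF sfM kS Hm fs(1)])
  have "elbo K M N U p opt ?qur qphi = (\<integral>y. H (y k) \<partial>PiM {k} M)" using el mi2 fs(2) by simp
  also have "\<dots> = integral\<^sup>L (M k) H" by (rule integral_singleton'[OF sfM kS Hm])
  finally have elH: "elbo K M N U p opt ?qur qphi = integral\<^sup>L (M k) H" .
  show "integrable (M k) (\<lambda>x. r x * (Erest_logZ M N C U p qu qphi k x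
            - (Hphi + (\<integral>\<theta>r. (\<Prod>m\<in>U - {k}. qu m (\<theta>r m)) * ln (\<Prod>m\<in>U - {k}. qu m (\<theta>r m)) \<partial>PiM (U - {k}) M))
            - ln (r x)))"
    using iH unfolding H_def Er_def HP_def Pk_def U'_def .
  show "elbo K M N U p opt (qu(k := r)) qphi = (\<integral>x. r x * (Erest_logZ M N C U p qu qphi k x
            - (Hphi + (\<integral>\<theta>r. (\<Prod>m\<in>U - {k}. qu m (\<theta>r m)) * ln (\<Prod>m\<in>U - {k}. qu m (\<theta>r m)) \<partial>PiM (U - {k}) M))
            - ln (r x)) \<partial>M k)"
    using elH unfolding H_def Er_def HP_def Pk_def U'_def .
qed

end



context setting begin

lemma part3:
  assumes k: "k \<in> U"
    and h4: "\<forall>x\<in>space (M k). integrable (PiM (U - {k}) M)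
          (\<lambda>\<theta>r. (\<Prod>m\<in>U - {k}. qu m (\<theta>r m)) * ln (Zc M N C U p qphi (\<theta>r(k := x))))"
    and h5: "integrable (M k) (\<lambda>x. exp (Erest_logZ M N C U p qu qphi k x))"
    and h6: "elbo_finite K M N U p opt (qu(k := opt_block M N C U p qu qphi k)) qphi"
  shows "is_density (M k) (opt_block M N C U p qu qphi k)
       \<and> (\<forall>r. is_density (M k) r \<and> elbo_finite K M N U p opt (qu(k := r)) qphi
            \<longrightarrow> elbo K M N U p opt (qu(k := r)) qphi
                \<le> elbo K M N U p opt (qu(k := opt_block M N C U p qu qphi k)) qphi)"
proof -
  define Er where "Er = Erest_logZ M N C U p qu qphi k"
  define c where "c = Hphi + (\<integral>\<theta>r. (\<Prod>m\<in>U - {k}. qu m (\<theta>r m)) * ln (\<Prod>m\<in>U - {k}. qu m (\<theta>r m)) \<partial>PiM (U - {k}) M)"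
  have quk: "is_density (M k) (qu k)" using qu_d k by auto
  have Z: "0 < (\<integral>x. exp (Er x) \<partial>M k)"
    using quk h5 unfolding is_density_def Er_def by (intro Z_pos[of "qu k"]) auto
  have ob: "opt_block M N C U p qu qphi k = (\<lambda>x. exp (Er x) / (\<integral>y. exp (Er y) \<partial>M k))"
    by (rule ext) (simp add: opt_block_def Er_def)
  have h5': "integrable (M k) (\<lambda>x. exp (Er x))" using h5 unfolding Er_def .
  have od: "is_density (M k) (opt_block M N C U p qu qphi k)"
    unfolding ob by (rule density_from_exp[OF h5' Z])
  have eo: "elbo K M N U p opt (qu(k := opt_block M N C U p qu qphi k)) qphi = ln (\<integral>x. exp (Er x) \<partial>M k) - c"
    using elbo_block(2)[OF k h4 h5 od h6] gibbs_opt[OF h5' Z ob, of c]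
    unfolding Er_def c_def by simp
  have le: "elbo K M N U p opt (qu(k := r)) qphi \<le> ln (\<integral>x. exp (Er x) \<partial>M k) - c"
    if r: "is_density (M k) r" and fr: "elbo_finite K M N U p opt (qu(k := r)) qphi" for r
  proof -
    note eb = elbo_block[OF k h4 h5 r fr]
    have "elbo K M N U p opt (qu(k := r)) qphi = (\<integral>x. r x * (Er x - c - ln (r x)) \<partial>M k)"
      using eb(2) unfolding Er_def c_def .
    also have "\<dots> \<le> ln (\<integral>x. exp (Er x) \<partial>M k) - c"
      using r eb(1) h5' unfolding is_density_def Er_def c_def by (intro gibbs_shift) auto
    finally show ?thesis .
  qed
  show ?thesis using od le eo by simp
qed

end



theorem proposition1:
  fixes K :: nat and M :: "nat \<Rightarrow> 'a measure" and N :: "'b measure"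
    and C U :: "nat set"
    and p :: "(nat \<Rightarrow> 'a) \<Rightarrow> 'b \<Rightarrow> real"
    and qc :: "(nat \<Rightarrow> 'a) \<Rightarrow> real" and qu :: "nat \<Rightarrow> 'a \<Rightarrow> real" and qphi :: "'b \<Rightarrow> real"
  assumes partition: "C \<inter> U = {}" "C \<union> U = {0..K}"
    and sfM: "\<forall>k\<in>{0..K}. sigma_finite_measure (M k)"
    and sfN: "sigma_finite_measure N"
    and p_meas: "(\<lambda>z. p (fst z) (snd z)) \<in> borel_measurable (ThetaM K M \<Otimes>\<^sub>M N)"
    and p_pos: "\<forall>\<theta>\<in>space (ThetaM K M). \<forall>\<phi>\<in>space N. 0 < p \<theta> \<phi>"
    and q: "in_QPF K M N C U qc qu qphi"
  shows
   "((\<forall>\<phi>\<in>space N. integrable (ThetaM K M) (\<lambda>\<theta>. qtheta U qc qu \<theta> * ln (p \<theta> \<phi>)))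
     \<and> integrable N (\<lambda>\<phi>. exp (Etheta_logp K M U p qc qu \<phi>))
     \<and> elbo_finite K M N U p qc qu (opt_phi K M N U p qc qu)
     \<longrightarrow> is_density N (opt_phi K M N U p qc qu)
       \<and> (\<forall>qphi'. is_density N qphi' \<and> elbo_finite K M N U p qc qu qphi'
            \<longrightarrow> elbo K M N U p qc qu qphi' \<le> elbo K M N U p qc qu (opt_phi K M N U p qc qu)))
  \<and> ((\<forall>\<theta>\<in>space (ThetaM K M). integrable N (\<lambda>\<phi>. qphi \<phi> * ln (p \<theta> \<phi>)))
     \<and> (\<forall>\<theta>U\<in>space (PiM U M).
          integrable (PiM C M) (\<lambda>\<theta>C. exp (Ephi_logp N p qphi (merge C U (\<theta>C, \<theta>U)))))
     \<and> elbo_finite K M N U p (opt_cond M N C U p qphi) qu qphi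
     \<longrightarrow> is_cond_density K M C U (opt_cond M N C U p qphi)
       \<and> (\<forall>qc'. is_cond_density K M C U qc' \<and> elbo_finite K M N U p qc' qu qphi
            \<longrightarrow> elbo K M N U p qc' qu qphi \<le> elbo K M N U p (opt_cond M N C U p qphi) qu qphi))
  \<and> (\<forall>k\<in>U.
       (\<forall>\<theta>\<in>space (ThetaM K M). integrable N (\<lambda>\<phi>. qphi \<phi> * ln (p \<theta> \<phi>)))
     \<and> (\<forall>\<theta>U\<in>space (PiM U M).
          integrable (PiM C M) (\<lambda>\<theta>C. exp (Ephi_logp N p qphi (merge C U (\<theta>C, \<theta>U)))))
     \<and> (\<forall>x\<in>space (M k). integrable (PiM (U - {k}) M)
          (\<lambda>\<theta>r. (\<Prod>m\<in>U - {k}. qu m (\<theta>r m)) * ln (Zc M N C U p qphi (\<theta>r(k := x)))))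
     \<and> integrable (M k) (\<lambda>x. exp (Erest_logZ M N C U p qu qphi k x))
     \<and> elbo_finite K M N U p (opt_cond M N C U p qphi) (qu(k := opt_block M N C U p qu qphi k)) qphi
     \<longrightarrow> is_density (M k) (opt_block M N C U p qu qphi k)
       \<and> (\<forall>r. is_density (M k) r \<and> elbo_finite K M N U p (opt_cond M N C U p qphi) (qu(k := r)) qphi
            \<longrightarrow> elbo K M N U p (opt_cond M N C U p qphi) (qu(k := r)) qphi
                \<le> elbo K M N U p (opt_cond M N C U p qphi)
                     (qu(k := opt_block M N C U p qu qphi k)) qphi))"
proof (intro conjI)
  show "(\<forall>\<phi>\<in>space N. integrable (ThetaM K M) (\<lambda>\<theta>. qtheta U qc qu \<theta> * ln (p \<theta> \<phi>)))
     \<and> integrable N (\<lambda>\<phi>. exp (Etheta_logp K M U p qc qu \<phi>))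
     \<and> elbo_finite K M N U p qc qu (opt_phi K M N U p qc qu)
     \<longrightarrow> is_density N (opt_phi K M N U p qc qu)
       \<and> (\<forall>qphi'. is_density N qphi' \<and> elbo_finite K M N U p qc qu qphi'
            \<longrightarrow> elbo K M N U p qc qu qphi' \<le> elbo K M N U p qc qu (opt_phi K M N U p qc qu))"
    using part1[OF partition sfM sfN p_meas q] by blast
next
  show "(\<forall>\<theta>\<in>space (ThetaM K M). integrable N (\<lambda>\<phi>. qphi \<phi> * ln (p \<theta> \<phi>)))
     \<and> (\<forall>\<theta>U\<in>space (PiM U M).
          integrable (PiM C M) (\<lambda>\<theta>C. exp (Ephi_logp N p qphi (merge C U (\<theta>C, \<theta>U)))))
     \<and> elbo_finite K M N U p (opt_cond M N C U p qphi) qu qphi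
     \<longrightarrow> is_cond_density K M C U (opt_cond M N C U p qphi)
       \<and> (\<forall>qc'. is_cond_density K M C U qc' \<and> elbo_finite K M N U p qc' qu qphi
            \<longrightarrow> elbo K M N U p qc' qu qphi \<le> elbo K M N U p (opt_cond M N C U p qphi) qu qphi)"
  proof (intro impI, elim conjE)
    assume h1: "\<forall>\<theta>\<in>space (ThetaM K M). integrable N (\<lambda>\<phi>. qphi \<phi> * ln (p \<theta> \<phi>))"
      and h2: "\<forall>\<theta>U\<in>space (PiM U M).
          integrable (PiM C M) (\<lambda>\<theta>C. exp (Ephi_logp N p qphi (merge C U (\<theta>C, \<theta>U))))"
      and h3: "elbo_finite K M N U p (opt_cond M N C U p qphi) qu qphi"
    interpret setting K M N C U p qc qu qphi
      using partition sfM sfN p_meas q h1 h2 by (rule setting.intro)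
    show "is_cond_density K M C U (opt_cond M N C U p qphi)
       \<and> (\<forall>qc'. is_cond_density K M C U qc' \<and> elbo_finite K M N U p qc' qu qphi
            \<longrightarrow> elbo K M N U p qc' qu qphi \<le> elbo K M N U p (opt_cond M N C U p qphi) qu qphi)"
      by (rule part2[OF h3])
  qed
next
  show "\<forall>k\<in>U.
       (\<forall>\<theta>\<in>space (ThetaM K M). integrable N (\<lambda>\<phi>. qphi \<phi> * ln (p \<theta> \<phi>)))
     \<and> (\<forall>\<theta>U\<in>space (PiM U M).
          integrable (PiM C M) (\<lambda>\<theta>C. exp (Ephi_logp N p qphi (merge C U (\<theta>C, \<theta>U)))))
     \<and> (\<forall>x\<in>space (M k). integrable (PiM (U - {k}) M)
          (\<lambda>\<theta>r. (\<Prod>m\<in>U - {k}. qu m (\<theta>r m)) * ln (Zc M N C U p qphi (\<theta>r(k := x)))))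
     \<and> integrable (M k) (\<lambda>x. exp (Erest_logZ M N C U p qu qphi k x))
     \<and> elbo_finite K M N U p (opt_cond M N C U p qphi) (qu(k := opt_block M N C U p qu qphi k)) qphi
     \<longrightarrow> is_density (M k) (opt_block M N C U p qu qphi k)
       \<and> (\<forall>r. is_density (M k) r \<and> elbo_finite K M N U p (opt_cond M N C U p qphi) (qu(k := r)) qphi
            \<longrightarrow> elbo K M N U p (opt_cond M N C U p qphi) (qu(k := r)) qphi
                \<le> elbo K M N U p (opt_cond M N C U p qphi)
                     (qu(k := opt_block M N C U p qu qphi k)) qphi)"
  proof (intro ballI impI, elim conjE)
    fix k assume k: "k \<in> U"
      and h1: "\<forall>\<theta>\<in>space (ThetaM K M). integrable N (\<lambda>\<phi>. qphi \<phi> * ln (p \<theta> \<phi>))"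
      and h2: "\<forall>\<theta>U\<in>space (PiM U M).
          integrable (PiM C M) (\<lambda>\<theta>C. exp (Ephi_logp N p qphi (merge C U (\<theta>C, \<theta>U))))"
      and h4: "\<forall>x\<in>space (M k). integrable (PiM (U - {k}) M)
          (\<lambda>\<theta>r. (\<Prod>m\<in>U - {k}. qu m (\<theta>r m)) * ln (Zc M N C U p qphi (\<theta>r(k := x))))"
      and h5: "integrable (M k) (\<lambda>x. exp (Erest_logZ M N C U p qu qphi k x))"
      and h6: "elbo_finite K M N U p (opt_cond M N C U p qphi) (qu(k := opt_block M N C U p qu qphi k)) qphi"
    interpret setting K M N C U p qc qu qphi
      using partition sfM sfN p_meas q h1 h2 by (rule setting.intro)
    show "is_density (M k) (opt_block M N C U p qu qphi k)
       \<and> (\<forall>r. is_density (M k) r \<and> elbo_finite K M N U p (opt_cond M N C U p qphi) (qu(k := r)) qphi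
            \<longrightarrow> elbo K M N U p (opt_cond M N C U p qphi) (qu(k := r)) qphi
                \<le> elbo K M N U p (opt_cond M N C U p qphi)
                     (qu(k := opt_block M N C U p qu qphi k)) qphi)"
      by (rule part3[OF k h4 h5 h6])
  qed
qed


end
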